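(* Let $n\geq1$ be an integer, $R_1>R_2>0$, $\lambda>0$, and let $\Omega:=\{x\in\mathbb{R}^n\mid R_2<|x|<R_1\}$, where $|\cdot|$ is the Euclidean norm. Let $H(t):=\tfrac12\left(\tfrac12t^2-\lambda\right)^2$ for $t\in\mathbb{R}$ and $\theta(r):=r^{n-1}$. Let $f:[R_2,R_1]\to\mathbb{R}$ be continuous with $\int_{R_2}^{R_1}\theta f=0$, such that there is a unique $R_3\in(R_2,R_1)$ with $f(R_3)=0$ and $f(r)\neq0$ for $r\in[R_2,R_1]\setminus\{R_3\}$, and such that $\int_{R_2}^{R_1}|\theta f|<R_2^{n-1}(2\lambda/3)^{3/2}$. Let $$U:=\{u=\upsilon\circ|\cdot|\ :\ \upsilon\in C^1[R_2,R_1],\ \upsilon'(R_1)=\upsilon'(R_2)=0\}\subset C^1(\overline\Omega),$$ endowed with the norm $\|u\|:=\sup_{x\in\overline\Omega}|u(x)|+\sup_{x\in\overline\Omega}|\nabla u(x)|$, and define $I:U\to\mathbb{R}$, $I[u]:=\int_\Omega\big(H(|\nabla u(x)|)-f(|x|)u(x)\big)\,dx$. Let $F(r):=-\frac{1}{r^{n-1}}\int_{R_2}^r f(\rho)\rho^{n-1}\,d\rho$ for $r\in[R_2,R_1]$, and for $A\in\left(-(2\lambda/3)^{3/2},(2\lambda/3)^{3/2}\right)$ let $z_2(A)$ be the unique solution in $\left(-\sqrt{2\lambda/3},\sqrt{2\lambda/3}\right)$ of $z\left(\tfrac12z^2-\lambda\right)=A$. Then $I$ (on $U$) has no local minimizers,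 and $\overline u\in U$ is a local maximizer of $I$ on $U$ if and only if there exists $u_0\in\mathbb{R}$ such that $\overline u(x)=u_0+\int_{R_2}^{|x|}z_2(F(\rho))\,d\rho$ for every $x\in\overline\Omega$.
   Context: Here $\upsilon\circ|\cdot|$ denotes the radially symmetric function $x\mapsto\upsilon(|x|)$ on $\overline\Omega$. Under the hypotheses, $|F(r)|<(2\lambda/3)^{3/2}$ on $[R_2,R_1]$, so $z_2(F(\rho))$ is well defined. *)

theory Defs
  imports "HOL-Analysis.Analysis"
begin

definition annulus :: "real \<Rightarrow> real \<Rightarrow> (real^'n) set" where
  "annulus R2 R1 = {x. R2 < norm x \<and> norm x < R1}"

definition cl_annulus :: "real \<Rightarrow> real \<Rightarrow> (real^'n) set" where
  "cl_annulus R2 R1 = {x. R2 \<le> norm x \<and> norm x \<le> R1}"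

definition Hfun :: "real \<Rightarrow> real \<Rightarrow> real" where
  "Hfun lam t = (1/2) * ((1/2) * t^2 - lam)^2"

definition C1_on_with :: "real \<Rightarrow> real \<Rightarrow> (real \<Rightarrow> real) \<Rightarrow> (real \<Rightarrow> real) \<Rightarrow> bool" where
  "C1_on_with a b v v' \<longleftrightarrow> continuous_on {a..b} v' \<and>
     (\<forall>r\<in>{a..b}. (v has_real_derivative v' r) (at r within {a..b}))"

text \<open>The space U of radial C^1 functions with Neumann condition; functions are only
  considered on the closed annulus.\<close>
definition Uspace :: "real \<Rightarrow> real \<Rightarrow> ((real^'n) \<Rightarrow> real) set" where
  "Uspace R2 R1 = {u. \<exists>v v'. C1_on_with R2 R1 v v' \<and> v' R1 = 0 \<and> v' R2 = 0 \<and>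
      (\<forall>x\<in>cl_annulus R2 R1. u x = v (norm x))}"

definition grad :: "real \<Rightarrow> real \<Rightarrow> ((real^'n) \<Rightarrow> real) \<Rightarrow> real^'n \<Rightarrow> real^'n" where
  "grad R2 R1 u x = (THE g. (u has_derivative (\<lambda>h. g \<bullet> h)) (at x within cl_annulus R2 R1))"

definition normU :: "real \<Rightarrow> real \<Rightarrow> ((real^'n) \<Rightarrow> real) \<Rightarrow> real" where
  "normU R2 R1 u = (SUP x\<in>cl_annulus R2 R1. \<bar>u x\<bar>) + (SUP x\<in>cl_annulus R2 R1. norm (grad R2 R1 u x))"

definition Ifun :: "real \<Rightarrow> real \<Rightarrow> real \<Rightarrow> (real \<Rightarrow> real) \<Rightarrow> ((real^'n) \<Rightarrow> real) \<Rightarrow> real" where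
  "Ifun lam R2 R1 f u = integral (annulus R2 R1)
      (\<lambda>x. Hfun lam (norm (grad R2 R1 u x)) - f (norm x) * u x)"

definition local_min_U :: "real \<Rightarrow> real \<Rightarrow> real \<Rightarrow> (real \<Rightarrow> real) \<Rightarrow> ((real^'n) \<Rightarrow> real) \<Rightarrow> bool" where
  "local_min_U lam R2 R1 f u \<longleftrightarrow> u \<in> Uspace R2 R1 \<and> (\<exists>e>0. \<forall>w\<in>Uspace R2 R1.
      normU R2 R1 (\<lambda>x. w x - u x) < e \<longrightarrow> Ifun lam R2 R1 f u \<le> Ifun lam R2 R1 f w)"

definition local_max_U :: "real \<Rightarrow> real \<Rightarrow> real \<Rightarrow> (real \<Rightarrow> real) \<Rightarrow> ((real^'n) \<Rightarrow> real) \<Rightarrow> bool" where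
  "local_max_U lam R2 R1 f u \<longleftrightarrow> u \<in> Uspace R2 R1 \<and> (\<exists>e>0. \<forall>w\<in>Uspace R2 R1.
      normU R2 R1 (\<lambda>x. w x - u x) < e \<longrightarrow> Ifun lam R2 R1 f w \<le> Ifun lam R2 R1 f u)"

definition Ffun :: "nat \<Rightarrow> real \<Rightarrow> (real \<Rightarrow> real) \<Rightarrow> real \<Rightarrow> real" where
  "Ffun n R2 f r = - (1 / r ^ (n - 1)) * integral {R2..r} (\<lambda>\<rho>. f \<rho> * \<rho> ^ (n - 1))"

definition z2 :: "real \<Rightarrow> real \<Rightarrow> real" where
  "z2 lam A = (THE z. - sqrt (2*lam/3) < z \<and> z < sqrt (2*lam/3) \<and> z * ((1/2) * z^2 - lam) = A)"

end

theory Submission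
  imports Defs "HOL-Analysis.Analysis"
begin

lemma vol_shell:
  fixes a b :: real
  assumes "0 \<le> a" "a \<le> b"
  shows "emeasure lborel {y::real^'n. a < norm y \<and> norm y < b}
     = ennreal (unit_ball_vol (CARD('n)) * (b ^ CARD('n) - a ^ CARD('n)))"
proof (cases "a = b")
  case True
  have "{y::real^'n. a < norm y \<and> norm y < b} = {}" using True by auto
  then have "emeasure lborel {y::real^'n. a < norm y \<and> norm y < b} = 0" by (metis emeasure_empty)
  then show ?thesis using True by simp
next
  case False
  have eq: "{y::real^'n. a < norm y \<and> norm y < b} = ball 0 b - cball 0 a"
    by (auto simp: dist_norm)
  have sub: "cball (0::real^'n) a \<subseteq> ball 0 b" using False assms by auto
  have "emeasure lborel (ball (0::real^'n) b - cball 0 a) = emeasure lborel (ball (0::real^'n) b) - emeasure lborel (cball (0::real^'n) a)"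
    by (rule emeasure_Diff) (use sub in \<open>auto simp: emeasure_cball assms\<close>)
  also have "\<dots> = ennreal (unit_ball_vol (CARD('n)) * b ^ CARD('n)) - ennreal (unit_ball_vol (CARD('n)) * a ^ CARD('n))"
    using assms by (simp add: emeasure_ball emeasure_cball)
  also have "\<dots> = ennreal (unit_ball_vol (CARD('n)) * (b ^ CARD('n) - a ^ CARD('n)))"
    using assms by (subst ennreal_minus) (auto simp: algebra_simps)
  finally show ?thesis using eq by simp
qed

lemma poly_has_integral:
  assumes "0 \<le> a" "a \<le> b" "(n::nat) \<ge> 1"
  shows "((\<lambda>r::real. r^(n-1)) has_integral (b^n - a^n)/n) {a..b}"
proof -
  have "((\<lambda>r::real. r^(n-1)) has_integral (b^n/n - a^n/n)) {a..b}"
  proof (rule fundamental_theorem_of_calculus[OF assms(2)])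
    fix x :: real assume "x \<in> {a..b}"
    have "((\<lambda>r::real. r^n/n) has_real_derivative (real n * x^(n-1))/n) (at x within {a..b})"
      using DERIV_cdivide[OF DERIV_pow[of n x "{a..b}"], of "real n"] by simp
    then show "((\<lambda>r::real. r^n/n) has_vector_derivative x^(n-1)) (at x within {a..b})"
      using assms by (simp add: has_real_derivative_iff_has_vector_derivative[symmetric])
  qed
  then show ?thesis by (simp add: diff_divide_distrib)
qed


lemma radial_integral:
  fixes h :: "real \<Rightarrow> real"
  assumes R: "0 < R2" "R2 < R1" and hc: "continuous_on {R2..R1} h"
  shows "integral (annulus R2 R1 :: (real^'n) set) (\<lambda>x. h (norm x))
     = (real CARD('n) * unit_ball_vol (CARD('n))) * integral {R2..R1} (\<lambda>r. r^(CARD('n)-1) * h r)"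
proof -
  define n where "n = CARD('n)"
  define V where "V = unit_ball_vol (real n)"
  define K where "K = real n * V"
  define A where "A = (annulus R2 R1 :: (real^'n) set)"
  define g where "g = (\<lambda>r::real. K * r^(n-1) * indicator {R2..R1} r)"
  define N where "N = distr (density lborel (indicator A)) (borel::real measure) norm"
  define D where "D = density (lborel::real measure) (\<lambda>r. ennreal (g r))"
  have n1: "n \<ge> 1" unfolding n_def by (simp add: Suc_leI)
  have Vpos: "V > 0" by (simp add: V_def)
  have Aeq: "A = norm -` {R2<..<R1}" unfolding A_def annulus_def by auto
  have Aopen: "open A" unfolding Aeq by (intro open_vimage) (auto intro: continuous_intros)
  have Asets: "A \<in> sets lborel" using Aopen by simp
  have gm: "g \<in> borel_measurable borel" unfolding g_def by measurable
  have NA: "emeasure N {x<..} = (if x < R1 then ennreal (V * (R1^n - (max x R2)^n)) else 0)" for x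
  proof -
    have "emeasure N {x<..} = emeasure (density lborel (indicator A)) (norm -` {x<..} \<inter> space (density lborel (indicator A)))"
      unfolding N_def by (rule emeasure_distr) auto
    also have "\<dots> = emeasure lborel (A \<inter> (norm -` {x<..}))"
    proof -
      have vo: "norm -` {x<..} \<in> sets (lborel::(real^'n) measure)"
        by (simp, intro borel_open open_vimage) (auto intro: continuous_intros)
      show ?thesis using emeasure_restricted[OF Asets vo] by simp
    qed
    also have "\<dots> = (if x < R1 then ennreal (V * (R1^n - (max x R2)^n)) else 0)"
    proof (cases "x < R1")
      case True
      have "A \<inter> (norm -` {x<..}) = {y::real^'n. max x R2 < norm y \<and> norm y < R1}"
        unfolding A_def annulus_def by auto
      then show ?thesis using True R vol_shell[of "max x R2" R1, where 'n='n]
        by (simp add: V_def n_def)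
    next
      case False
      have "A \<inter> (norm -` {x<..}) = {}" unfolding A_def annulus_def using False by auto
      then show ?thesis using False by simp
    qed
    finally show ?thesis .
  qed
  have DA: "emeasure D {x<..} = (if x < R1 then ennreal (V * (R1^n - (max x R2)^n)) else 0)" for x
  proof -
    have "emeasure D {x<..} = (\<integral>\<^sup>+r. ennreal (g r) * indicator {x<..} r \<partial>lborel)"
      unfolding D_def by (subst emeasure_density) (use gm in auto)
    also have "\<dots> = (\<integral>\<^sup>+r. ennreal (K * r^(n-1)) * indicator ({R2..R1} \<inter> {x<..}) r \<partial>lborel)"
      by (intro nn_integral_cong) (auto simp: g_def indicator_def)
    also have "\<dots> = (if x < R1 then ennreal (V * (R1^n - (max x R2)^n)) else 0)"
    proof (cases "x < R1")
      case True
      define m where "m = max x R2"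
      have m: "0 \<le> m" "m \<le> R1" using True R by (auto simp: m_def)
      have "((\<lambda>r. K * r^(n-1)) has_integral K * ((R1^n - m^n)/n)) {m..R1}"
        by (intro has_integral_mult_right poly_has_integral) (use m n1 in auto)
      then have I: "((\<lambda>r. K * r^(n-1)) has_integral V * (R1^n - m^n)) {m..R1}"
        using n1 by (simp add: K_def)
      have I2: "((\<lambda>r. K * r^(n-1)) has_integral V * (R1^n - m^n)) ({R2..R1} \<inter> {x<..})"
      proof (cases "x < R2")
        case True
        then have "{R2..R1} \<inter> {x<..} = {m..R1}" by (auto simp: m_def)
        then show ?thesis using I by simp
      next
        case False
        then have e: "{R2..R1} \<inter> {x<..} = {m<..R1}" by (auto simp: m_def)
        show ?thesis unfolding e
          by (rule has_integral_spike_set_eq[THEN iffD1, OF _ _ I])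
             (auto intro: negligible_subset[of "{m}"])
      qed
      have "(\<integral>\<^sup>+r. ennreal (K * r^(n-1)) * indicator ({R2..R1} \<inter> {x<..}) r \<partial>lborel)
          = ennreal (V * (R1^n - m^n))"
        by (rule nn_integral_has_integral_lebesgue'[OF _ I2]) (use R Vpos n1 in \<open>auto simp: K_def\<close>)
      then show ?thesis using True by (simp add: m_def)
    next
      case False
      have "{R2..R1} \<inter> {x<..} = {}" using False by auto
      then show ?thesis using False by simp
    qed
    finally show ?thesis .
  qed
  have ND: "N = D"
  proof (rule measure_eqI_lessThan)
    show "sets N = sets borel" "sets D = sets borel" by (simp_all add: N_def D_def)
    show "emeasure N {x<..} < \<infinity>" for x by (simp add: NA)
    show "emeasure N {x<..} = emeasure D {x<..}" for x by (simp add: NA DA)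
  qed
  define h' where "h' = (\<lambda>r. indicator {R2..R1} r *\<^sub>R h r)"
  have h'm: "h' \<in> borel_measurable borel"
    unfolding h'_def by (rule borel_measurable_continuous_on_indicator[OF _ hc]) simp
  define C where "C = (cl_annulus R2 R1 :: (real^'n) set)"
  have Ccomp: "compact C"
  proof -
    have "C = cball 0 R1 \<inter> norm -` {R2..}" unfolding C_def cl_annulus_def by auto
    moreover have "closed (norm -` {R2..} :: (real^'n) set)"
      by (intro closed_vimage) (auto intro: continuous_intros)
    ultimately show ?thesis by (simp add: compact_Int_closed)
  qed
  have Ccont: "continuous_on C (\<lambda>x. h (norm x))"
    by (rule continuous_on_compose2[OF hc]) (auto simp: C_def cl_annulus_def intro: continuous_intros)
  have siC: "set_integrable lborel C (\<lambda>x. h (norm x))"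
    unfolding set_integrable_def by (rule borel_integrable_compact[OF Ccomp Ccont])
  have siA: "set_integrable lborel A (\<lambda>x. h (norm x))"
    by (rule set_integrable_subset[OF siC Asets]) (auto simp: A_def C_def annulus_def cl_annulus_def)
  have siI: "set_integrable lborel {R2..R1} (\<lambda>r. K * r^(n-1) * h r)"
    unfolding set_integrable_def
    by (rule borel_integrable_compact) (auto intro!: continuous_intros hc)
  have "integral\<^sup>L N h' = integral\<^sup>L (density lborel (\<lambda>x. ennreal (indicator A x))) (\<lambda>x. h' (norm x))"
    unfolding N_def by (subst integral_distr) (auto simp: h'm ennreal_indicator)
  also have "\<dots> = (LINT x|lborel. indicator A x *\<^sub>R h' (norm x))"
  proof (rule integral_density)
    show "(\<lambda>x. h' (norm x)) \<in> borel_measurable lborel"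
      using h'm by measurable
    show "indicat_real A \<in> borel_measurable lborel"
      using Asets by (simp add: borel_measurable_indicator)
  qed simp
  also have "\<dots> = (LINT x|lborel. indicator A x *\<^sub>R h (norm x))"
    by (intro Bochner_Integration.integral_cong) (auto simp: h'_def A_def annulus_def indicator_def)
  also have "\<dots> = integral A (\<lambda>x. h (norm x))"
    using set_borel_integral_eq_integral(2)[OF siA] by (simp add: set_lebesgue_integral_def)
  finally have L: "integral\<^sup>L N h' = integral A (\<lambda>x. h (norm x))" .
  have "integral\<^sup>L D h' = (LINT r|lborel. g r *\<^sub>R h' r)"
  proof -
    have "\<forall>r. 0 \<le> g r" using R Vpos by (auto simp: g_def K_def indicator_def)
    then show ?thesis
      unfolding D_def by (intro integral_density) (auto simp: gm h'm)
  qed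
  also have "\<dots> = (LINT r|lborel. indicator {R2..R1} r *\<^sub>R (K * r^(n-1) * h r))"
    by (intro Bochner_Integration.integral_cong) (auto simp: h'_def g_def indicator_def)
  also have "\<dots> = integral {R2..R1} (\<lambda>r. K * r^(n-1) * h r)"
    using set_borel_integral_eq_integral(2)[OF siI] by (simp add: set_lebesgue_integral_def)
  also have "\<dots> = K * integral {R2..R1} (\<lambda>r. r^(n-1) * h r)"
    by (simp add: mult.assoc)
  finally have Rr: "integral\<^sup>L D h' = K * integral {R2..R1} (\<lambda>r. r^(n-1) * h r)" .
  show ?thesis using L Rr ND by (simp add: A_def K_def V_def n_def)
qed


lemma norm_path_sq:
  fixes x v :: "'a::real_inner"
  shows "(norm (x + t *\<^sub>R v))^2 = (norm x)^2 + 2*t*(x \<bullet> v) + t^2 * (norm v)^2"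
  unfolding power2_norm_eq_inner by (simp add: inner_add_left inner_add_right inner_commute algebra_simps power2_eq_square)

lemma cl_path:
  fixes x v :: "real^'n"
  assumes R: "0 < R2" "R2 < R1" and x: "x \<in> cl_annulus R2 R1"
    and av: "(if norm x = R1 then -x else x) \<bullet> v > 0"
  shows "\<exists>\<delta>>0. \<forall>t. 0 \<le> t \<and> t \<le> \<delta> \<longrightarrow> x + t *\<^sub>R v \<in> cl_annulus R2 R1"
proof -
  have xn: "R2 \<le> norm x" "norm x \<le> R1" using x by (auto simp: cl_annulus_def)
  have vne: "v \<noteq> 0" using av by auto
  then have vp: "(norm v)^2 > 0" by simp
  have key: "x + t *\<^sub>R v \<in> cl_annulus R2 R1" if "R2^2 \<le> (norm (x + t *\<^sub>R v))^2" "(norm (x + t *\<^sub>R v))^2 \<le> R1^2" for t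
  proof -
    have "R2 \<le> norm (x + t *\<^sub>R v)" using power2_le_imp_le[OF that(1) norm_ge_zero] .
    moreover have "norm (x + t *\<^sub>R v) \<le> R1" using power2_le_imp_le[OF that(2)] R by simp
    ultimately show ?thesis by (simp add: cl_annulus_def)
  qed
  show ?thesis
  proof (cases "norm x = R1")
    case True
    then have xv: "x \<bullet> v < 0" using av by simp
    define \<delta> where "\<delta> = min (- (x \<bullet> v) / (norm v)^2) ((R1^2 - R2^2) / (2 * (- (x \<bullet> v))))"
    have rr: "R2^2 < R1^2" using R by (simp add: power_strict_mono)
    have p1: "- (x \<bullet> v) / (norm v)^2 > 0" using xv vp by (intro divide_pos_pos) auto
    have p2: "(R1^2 - R2^2) / (2 * (- (x \<bullet> v))) > 0" using xv rr by (intro divide_pos_pos) auto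
    have dpos: "\<delta> > 0" unfolding \<delta>_def using p1 p2 by simp
    show ?thesis
    proof (intro exI[of _ \<delta>] conjI allI impI dpos)
      fix t assume t: "0 \<le> t \<and> t \<le> \<delta>"
      have t1: "t * (norm v)^2 \<le> - (x \<bullet> v)"
        using t vp unfolding \<delta>_def by (auto simp: field_simps)
      have t2: "t * (2 * (- (x \<bullet> v))) \<le> R1^2 - R2^2"
        using t xv unfolding \<delta>_def by (auto simp: field_simps)
      have e: "(norm (x + t *\<^sub>R v))^2 = R1^2 + 2*t*(x \<bullet> v) + t^2 * (norm v)^2"
        using norm_path_sq[of x t v] True by simp
      have "t^2 * (norm v)^2 \<le> t * (- (x \<bullet> v))"
        using mult_left_mono[OF t1, of t] t by (simp add: power2_eq_square algebra_simps)
      moreover have "0 \<le> t^2 * (norm v)^2" by simp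
      ultimately show "x + t *\<^sub>R v \<in> cl_annulus R2 R1"
        using t t2 xv by (intro key; unfold e; simp add: algebra_simps; linarith)
    qed
  next
    case False
    then have xv: "x \<bullet> v > 0" using av by simp
    have xl: "norm x < R1" using False xn by simp
    have gap: "(norm x)^2 < R1^2" using xl xn R by (simp add: power_strict_mono)
    define \<delta> where "\<delta> = min 1 ((R1^2 - (norm x)^2) / (2 * (x \<bullet> v) + (norm v)^2))"
    have dd: "0 < 2*(x \<bullet> v) + (norm v)^2" using xv vp by linarith
    have dpos: "\<delta> > 0" unfolding \<delta>_def using dd gap by (auto intro!: divide_pos_pos)
    show ?thesis
    proof (intro exI[of _ \<delta>] conjI allI impI dpos)
      fix t assume t: "0 \<le> t \<and> t \<le> \<delta>"
      have t0: "t \<le> 1" using t unfolding \<delta>_def by simp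
      have t1: "t * (2 * (x \<bullet> v) + (norm v)^2) \<le> R1^2 - (norm x)^2"
        using t xv vp unfolding \<delta>_def by (auto simp: field_simps)
      have e: "(norm (x + t *\<^sub>R v))^2 = (norm x)^2 + 2*t*(x \<bullet> v) + t^2 * (norm v)^2"
        by (rule norm_path_sq)
      have "t^2 * (norm v)^2 \<le> t * (norm v)^2"
        using t t0 mult_left_le[of t t] by (intro mult_right_mono) (auto simp: power2_eq_square)
      moreover have "R2^2 \<le> (norm x)^2" using xn R by (simp add: power_mono)
      moreover have "0 \<le> t^2 * (norm v)^2" by simp
      moreover have "0 \<le> 2 * t * (x \<bullet> v)" using t xv by simp
      moreover have t1': "2*t*(x \<bullet> v) + t*(norm v)^2 \<le> R1^2 - (norm x)^2"
        using t1 by (simp add: algebra_simps)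
      ultimately have "R2^2 \<le> (norm (x + t *\<^sub>R v))^2" "(norm (x + t *\<^sub>R v))^2 \<le> R1^2"
        unfolding e by linarith+
      then show "x + t *\<^sub>R v \<in> cl_annulus R2 R1" by (rule key)
    qed
  qed
qed


lemma deriv_unique_cl:
  fixes u :: "real^'n \<Rightarrow> real"
  assumes R: "0 < R2" "R2 < R1" and x: "x \<in> cl_annulus R2 R1"
    and d1: "(u has_derivative (\<lambda>h. g \<bullet> h)) (at x within cl_annulus R2 R1)"
    and d2: "(u has_derivative (\<lambda>h. g' \<bullet> h)) (at x within cl_annulus R2 R1)"
  shows "g = g'"
proof -
  define a where "a = (if norm x = R1 then -x else x)"
  have xne: "x \<noteq> 0" using x R by (auto simp: cl_annulus_def)
  have ane: "a \<noteq> 0" using xne by (simp add: a_def)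
  have half: "g \<bullet> v = g' \<bullet> v" if av: "a \<bullet> v > 0" for v
  proof -
    obtain \<delta> where \<delta>: "\<delta> > 0" "\<forall>t. 0 \<le> t \<and> t \<le> \<delta> \<longrightarrow> x + t *\<^sub>R v \<in> cl_annulus R2 R1"
      using cl_path[OF R x, of v] av by (auto simp: a_def)
    let ?p = "\<lambda>t::real. x + t *\<^sub>R v"
    have pd: "(?p has_derivative (\<lambda>t. t *\<^sub>R v)) (at 0 within {0..\<delta>})"
      by (auto intro!: derivative_eq_intros)
    have img: "?p ` {0..\<delta>} \<subseteq> cl_annulus R2 R1" using \<delta> by auto
    have e1: "((u \<circ> ?p) has_derivative ((\<lambda>h. g \<bullet> h) \<circ> (\<lambda>t. t *\<^sub>R v))) (at 0 within {0..\<delta>})"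
      using diff_chain_within[OF pd has_derivative_subset[OF _ img]] d1 by simp
    have e2: "((u \<circ> ?p) has_derivative ((\<lambda>h. g' \<bullet> h) \<circ> (\<lambda>t. t *\<^sub>R v))) (at 0 within {0..\<delta>})"
      using diff_chain_within[OF pd has_derivative_subset[OF _ img]] d2 by simp
    have "((\<lambda>h. g \<bullet> h) \<circ> (\<lambda>t. t *\<^sub>R v)) = ((\<lambda>h. g' \<bullet> h) \<circ> (\<lambda>t::real. t *\<^sub>R v))"
    proof (rule frechet_derivative_unique_within[OF e1 e2])
      fix i :: real and e :: real assume "i \<in> Basis" "0 < e"
      then show "\<exists>d. 0 < \<bar>d\<bar> \<and> \<bar>d\<bar> < e \<and> 0 + d *\<^sub>R i \<in> {0..\<delta>}"
        using \<delta>(1) by (intro exI[of _ "min (e/2) \<delta>"]) auto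
    qed
    then show ?thesis by (metis comp_apply scaleR_one)
  qed
  have all: "g \<bullet> w = g' \<bullet> w" for w
  proof -
    have aa: "a \<bullet> a > 0" using ane by simp
    define c where "c = (\<bar>a \<bullet> w\<bar> + 1) / (a \<bullet> a)"
    have c: "c > 0" unfolding c_def using aa by (intro divide_pos_pos) auto
    have cc: "c * (a \<bullet> a) = \<bar>a \<bullet> w\<bar> + 1" unfolding c_def using aa by simp
    have "a \<bullet> (w + c *\<^sub>R a) > 0" using cc by (simp add: inner_add_right)
    then have h1: "g \<bullet> (w + c *\<^sub>R a) = g' \<bullet> (w + c *\<^sub>R a)" by (rule half)
    have "a \<bullet> (c *\<^sub>R a) > 0" using c aa by simp
    then have h2: "g \<bullet> (c *\<^sub>R a) = g' \<bullet> (c *\<^sub>R a)" by (rule half)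
    from h1 h2 c show ?thesis by (auto simp: inner_add_right)
  qed
  have "(g - g') \<bullet> (g - g') = 0" using all by (simp add: inner_diff_left inner_diff_right)
  then show "g = g'" by simp
qed

lemma grad_radial:
  fixes u :: "real^'n \<Rightarrow> real"
  assumes R: "0 < R2" "R2 < R1" and x: "x \<in> cl_annulus R2 R1"
    and vd: "(v has_real_derivative c) (at (norm x) within {R2..R1})"
    and ueq: "\<forall>y\<in>cl_annulus R2 R1. u y = v (norm y)"
  shows "(u has_derivative (\<lambda>h. ((c / norm x) *\<^sub>R x) \<bullet> h)) (at x within cl_annulus R2 R1)"
    and "grad R2 R1 u x = (c / norm x) *\<^sub>R x"
proof -
  have xne: "x \<noteq> 0" using x R by (auto simp: cl_annulus_def)
  have nd: "(norm has_derivative (\<lambda>h. h \<bullet> sgn x)) (at x within cl_annulus R2 R1)"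
    using has_derivative_norm[OF xne] by (auto intro: has_derivative_at_withinI)
  have img: "norm ` cl_annulus R2 R1 \<subseteq> {R2..R1}" by (auto simp: cl_annulus_def)
  have vd': "(v has_derivative (\<lambda>t. c * t)) (at (norm x) within norm ` cl_annulus R2 R1)"
    using has_derivative_subset[OF vd[unfolded has_field_derivative_def] img] by simp
  have ch: "((v \<circ> norm) has_derivative ((\<lambda>t. c * t) \<circ> (\<lambda>h. h \<bullet> sgn x))) (at x within cl_annulus R2 R1)"
    by (rule diff_chain_within[OF nd vd'])
  have ch2: "(u has_derivative ((\<lambda>t. c * t) \<circ> (\<lambda>h. h \<bullet> sgn x))) (at x within cl_annulus R2 R1)"
    by (rule has_derivative_transform_within[OF ch zero_less_one x]) (use ueq in simp)
  show D: "(u has_derivative (\<lambda>h. ((c / norm x) *\<^sub>R x) \<bullet> h)) (at x within cl_annulus R2 R1)"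
    by (rule has_derivative_eq_rhs[OF ch2]) (auto simp: fun_eq_iff sgn_div_norm inner_commute divide_inverse)
  show "grad R2 R1 u x = (c / norm x) *\<^sub>R x"
    unfolding grad_def
  proof (rule the_equality)
    fix g assume "(u has_derivative (\<lambda>h. g \<bullet> h)) (at x within cl_annulus R2 R1)"
    then show "g = (c / norm x) *\<^sub>R x" by (rule deriv_unique_cl[OF R x _ D])
  qed (rule D)
qed


lemma C1_cont: "C1_on_with a b v v' \<Longrightarrow> continuous_on {a..b} v"
  unfolding C1_on_with_def by (intro DERIV_continuous_on) blast

lemma norm_image_cl:
  assumes "0 < R2" "R2 < R1"
  shows "norm ` (cl_annulus R2 R1 :: (real^'n) set) = {R2..R1}"
proof
  show "norm ` (cl_annulus R2 R1 :: (real^'n) set) \<subseteq> {R2..R1}" by (auto simp: cl_annulus_def)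
  show "{R2..R1} \<subseteq> norm ` (cl_annulus R2 R1 :: (real^'n) set)"
  proof
    fix r assume r: "r \<in> {R2..R1}"
    obtain e :: "real^'n" where e: "e \<in> Basis" using nonempty_Basis by blast
    have ne: "norm e = 1" using e by simp
    have "norm (r *\<^sub>R e) = r" using r assms ne by simp
    moreover then have "r *\<^sub>R e \<in> cl_annulus R2 R1" using r by (simp add: cl_annulus_def)
    ultimately show "r \<in> norm ` (cl_annulus R2 R1 :: (real^'n) set)" by (metis image_eqI)
  qed
qed

lemma grad_norm_eq:
  fixes u :: "real^'n \<Rightarrow> real"
  assumes R: "0 < R2" "R2 < R1" and C1: "C1_on_with R2 R1 v v'"
    and ueq: "\<forall>y\<in>cl_annulus R2 R1. u y = v (norm y)" and x: "x \<in> cl_annulus R2 R1"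
  shows "norm (grad R2 R1 u x) = \<bar>v' (norm x)\<bar>"
proof -
  have nx: "norm x \<in> {R2..R1}" using x by (auto simp: cl_annulus_def)
  have xne: "norm x > 0" using x R by (auto simp: cl_annulus_def)
  have vd: "(v has_real_derivative v' (norm x)) (at (norm x) within {R2..R1})"
    using C1 nx unfolding C1_on_with_def by blast
  have "grad R2 R1 u x = (v' (norm x) / norm x) *\<^sub>R x" by (rule grad_radial(2)[OF R x vd ueq])
  then show ?thesis using xne by simp
qed

lemma bdd_cont_abs:
  fixes g :: "real \<Rightarrow> real"
  assumes "continuous_on {a..b} g"
  shows "bdd_above ((\<lambda>r. \<bar>g r\<bar>) ` {a..b})"
proof -
  have "compact ((\<lambda>r. \<bar>g r\<bar>) ` {a..b})"
    by (intro compact_continuous_image continuous_intros assms) simp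
  then show ?thesis by (intro bounded_imp_bdd_above compact_imp_bounded)
qed

lemma cont_bound:
  fixes g :: "real \<Rightarrow> real"
  assumes "continuous_on {a..b} g"
  shows "\<exists>M\<ge>0. \<forall>r\<in>{a..b}. \<bar>g r\<bar> \<le> M"
proof -
  have "compact (g ` {a..b})" by (intro compact_continuous_image assms) simp
  then obtain M where "\<forall>y\<in>g ` {a..b}. norm y \<le> M" using compact_imp_bounded bounded_iff by metis
  then show ?thesis by (intro exI[of _ "max M 0"]) auto
qed

lemma normU_eq:
  fixes u :: "real^'n \<Rightarrow> real"
  assumes R: "0 < R2" "R2 < R1" and C1: "C1_on_with R2 R1 v v'"
    and ueq: "\<forall>y\<in>cl_annulus R2 R1. u y = v (norm y)"
  shows "normU R2 R1 u = (SUP r\<in>{R2..R1}. \<bar>v r\<bar>) + (SUP r\<in>{R2..R1}. \<bar>v' r\<bar>)"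
proof -
  have im: "norm ` (cl_annulus R2 R1 :: (real^'n) set) = {R2..R1}" by (rule norm_image_cl[OF R])
  have "(SUP x\<in>cl_annulus R2 R1. \<bar>u x\<bar>) = (SUP x\<in>(cl_annulus R2 R1 :: (real^'n) set). \<bar>v (norm x)\<bar>)"
    using ueq by (metis (mono_tags, lifting) image_cong)
  also have "\<dots> = (SUP r\<in>norm ` (cl_annulus R2 R1 :: (real^'n) set). \<bar>v r\<bar>)"
    by (simp add: image_image)
  finally have s1: "(SUP x\<in>cl_annulus R2 R1. \<bar>u x\<bar>) = (SUP r\<in>{R2..R1}. \<bar>v r\<bar>)" using im by simp
  have "(SUP x\<in>cl_annulus R2 R1. norm (grad R2 R1 u x)) = (SUP x\<in>(cl_annulus R2 R1 :: (real^'n) set). \<bar>v' (norm x)\<bar>)"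
    using grad_norm_eq[OF R C1 ueq] by (metis (mono_tags, lifting) image_cong)
  also have "\<dots> = (SUP r\<in>norm ` (cl_annulus R2 R1 :: (real^'n) set). \<bar>v' r\<bar>)"
    by (simp add: image_image)
  finally have s2: "(SUP x\<in>cl_annulus R2 R1. norm (grad R2 R1 u x)) = (SUP r\<in>{R2..R1}. \<bar>v' r\<bar>)" using im by simp
  show ?thesis unfolding normU_def s1 s2 ..
qed

lemma normU_upper:
  fixes u :: "real^'n \<Rightarrow> real"
  assumes R: "0 < R2" "R2 < R1" and C1: "C1_on_with R2 R1 v v'"
    and ueq: "\<forall>y\<in>cl_annulus R2 R1. u y = v (norm y)"
    and b1: "\<forall>r\<in>{R2..R1}. \<bar>v r\<bar> \<le> M1" and b2: "\<forall>r\<in>{R2..R1}. \<bar>v' r\<bar> \<le> M2"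
  shows "normU R2 R1 u \<le> M1 + M2"
proof -
  have ne: "{R2..R1} \<noteq> {}" using R by auto
  have "(SUP r\<in>{R2..R1}. \<bar>v r\<bar>) \<le> M1" using b1 ne by (intro cSUP_least) auto
  moreover have "(SUP r\<in>{R2..R1}. \<bar>v' r\<bar>) \<le> M2" using b2 ne by (intro cSUP_least) auto
  ultimately show ?thesis unfolding normU_eq[OF R C1 ueq] by simp
qed

lemma normU_lower:
  fixes u :: "real^'n \<Rightarrow> real"
  assumes R: "0 < R2" "R2 < R1" and C1: "C1_on_with R2 R1 v v'"
    and ueq: "\<forall>y\<in>cl_annulus R2 R1. u y = v (norm y)" and r: "r \<in> {R2..R1}"
  shows "\<bar>v' r\<bar> \<le> normU R2 R1 u"
proof -
  have c1: "continuous_on {R2..R1} v" by (rule C1_cont[OF C1])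
  have c2: "continuous_on {R2..R1} v'" using C1 by (simp add: C1_on_with_def)
  have R2in: "R2 \<in> {R2..R1}" using R by simp
  have "0 \<le> \<bar>v R2\<bar>" by simp
  also have "\<dots> \<le> (SUP r\<in>{R2..R1}. \<bar>v r\<bar>)" by (rule cSUP_upper[OF R2in bdd_cont_abs[OF c1]])
  finally have a: "0 \<le> (SUP r\<in>{R2..R1}. \<bar>v r\<bar>)" .
  have b: "\<bar>v' r\<bar> \<le> (SUP r\<in>{R2..R1}. \<bar>v' r\<bar>)" by (rule cSUP_upper[OF r bdd_cont_abs[OF c2]])
  show ?thesis unfolding normU_eq[OF R C1 ueq] using a b by simp
qed

lemma deriv_unique_interval:
  fixes v :: "real \<Rightarrow> real"
  assumes "a < b" "r \<in> {a..b}"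
    and "(v has_real_derivative d1) (at r within {a..b})" "(v has_real_derivative d2) (at r within {a..b})"
  shows "d1 = d2"
proof -
  have "(*) d1 = (*) d2"
  proof (rule frechet_derivative_unique_within)
    show "(v has_derivative (*) d1) (at r within {a..b})" using assms(3) by (simp add: has_field_derivative_def)
    show "(v has_derivative (*) d2) (at r within {a..b})" using assms(4) by (simp add: has_field_derivative_def)
    fix i :: real and e :: real assume i: "i \<in> Basis" and e: "0 < e"
    then have i1: "i = 1" by simp
    show "\<exists>d. 0 < \<bar>d\<bar> \<and> \<bar>d\<bar> < e \<and> r + d *\<^sub>R i \<in> {a..b}"
    proof (cases "r < b")
      case True
      then show ?thesis using e assms(2) i1 by (intro exI[of _ "min (e/2) (b - r)"]) auto
    next
      case False
      then have "r = b" using assms(2) by auto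
      then show ?thesis using e assms(1) i1 by (intro exI[of _ "- min (e/2) (b - a)"]) auto
    qed
  qed
  then show ?thesis by (metis mult.right_neutral)
qed

lemma C1_diff:
  "C1_on_with a b v v' \<Longrightarrow> C1_on_with a b w w' \<Longrightarrow> C1_on_with a b (\<lambda>r. w r - v r) (\<lambda>r. w' r - v' r)"
  unfolding C1_on_with_def by (auto intro!: continuous_intros DERIV_diff)


definition cub :: "real \<Rightarrow> real \<Rightarrow> real" where "cub lam z = z * ((1/2)*z^2 - lam)"

lemma B_eq: assumes "lam > 0" shows "(2*lam/3) powr (3/2) = sqrt (2*lam/3) ^ 3"
proof -
  have a: "2*lam/3 > 0" using assms by simp
  have e: "(3/2::real) = 1 + 1/2" by simp
  have "(2*lam/3) powr (3/2) = (2*lam/3) powr (1 + 1/2)" by (simp only: e)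
  also have "\<dots> = (2*lam/3) powr 1 * (2*lam/3) powr (1/2)" by (rule powr_add)
  also have "\<dots> = (2*lam/3) * sqrt (2*lam/3)" using a by (subst powr_half_sqrt) auto
  also have "\<dots> = sqrt (2*lam/3) ^ 3" using a by (simp add: power3_eq_cube)
  finally show ?thesis .
qed

lemma s_sq: assumes "lam > 0" shows "sqrt (2*lam/3) ^ 2 = 2*lam/3" using assms by simp

lemma cub_s: assumes "lam > 0"
  shows "cub lam (sqrt (2*lam/3)) = - (sqrt (2*lam/3) ^ 3)" "cub lam (- sqrt (2*lam/3)) = sqrt (2*lam/3) ^ 3"
proof -
  let ?s = "sqrt (2*lam/3)"
  have s2: "?s^2 = 2*lam/3" using assms by simp
  have "?s^3 = ?s * ?s^2" by (simp add: power3_eq_cube power2_eq_square)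
  then show "cub lam ?s = - (?s ^ 3)" "cub lam (- ?s) = ?s ^ 3" unfolding cub_def using s2
    by (simp_all add: algebra_simps)
qed

lemma cub_diff: "cub lam a - cub lam b = (a - b) * ((a^2 + a*b + b^2)/2 - lam)"
  unfolding cub_def by (simp add: field_simps power2_eq_square)

lemma cub_strict_dec:
  assumes "lam > 0" "- sqrt (2*lam/3) \<le> a" "a < b" "b \<le> sqrt (2*lam/3)"
  shows "cub lam b < cub lam a"
proof -
  let ?s = "sqrt (2*lam/3)"
  have s2: "?s^2 = 2*lam/3" using assms by simp
  have a2: "a^2 \<le> ?s^2" using assms by (intro abs_le_square_iff[THEN iffD1]) auto
  have b2: "b^2 \<le> ?s^2" using assms by (intro abs_le_square_iff[THEN iffD1]) auto
  have "(a-b)^2 = a^2 - 2*a*b + b^2" by (simp add: power2_diff)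
  moreover have "(a-b)^2 > 0" using assms by simp
  ultimately have "a^2 + a*b + b^2 < 3 * ?s^2" using a2 b2 by linarith
  then have "(a^2 + a*b + b^2)/2 - lam < 0" using s2 by simp
  moreover have "a - b < 0" using assms by simp
  ultimately have "cub lam a - cub lam b > 0" unfolding cub_diff by (simp add: mult_neg_neg)
  then show ?thesis by simp
qed

lemma cub_dec:
  assumes "lam > 0" "- sqrt (2*lam/3) \<le> a" "a \<le> b" "b \<le> sqrt (2*lam/3)"
  shows "cub lam b \<le> cub lam a"
  using cub_strict_dec[of lam a b] assms by (cases "a = b") auto

lemma z2_char:
  assumes "lam > 0" "- sqrt (2*lam/3) < z" "z < sqrt (2*lam/3)" "cub lam z = A"
  shows "z2 lam A = z"
  unfolding z2_def
proof (rule the_equality)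
  show "- sqrt (2*lam/3) < z \<and> z < sqrt (2*lam/3) \<and> z * ((1/2) * z^2 - lam) = A"
    using assms by (simp add: cub_def)
next
  fix y assume y: "- sqrt (2*lam/3) < y \<and> y < sqrt (2*lam/3) \<and> y * ((1/2) * y^2 - lam) = A"
  show "y = z"
  proof (rule ccontr)
    assume "y \<noteq> z"
    then consider "y < z" | "z < y" by linarith
    then show False
    proof cases
      case 1 then have "cub lam z < cub lam y" using cub_strict_dec[of lam y z] assms y by auto
      then show False using y assms by (simp add: cub_def)
    next
      case 2 then have "cub lam y < cub lam z" using cub_strict_dec[of lam z y] assms y by auto
      then show False using y assms by (simp add: cub_def)
    qed
  qed
qed

lemma z2_props:
  assumes "lam > 0" "\<bar>A\<bar> < sqrt (2*lam/3) ^ 3"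
  shows "- sqrt (2*lam/3) < z2 lam A" "z2 lam A < sqrt (2*lam/3)" "cub lam (z2 lam A) = A"
proof -
  let ?s = "sqrt (2*lam/3)"
  have sp: "?s > 0" using assms by simp
  have cont: "continuous_on {-?s..?s} (cub lam)" unfolding cub_def by (intro continuous_intros)
  have "\<exists>x\<ge>-?s. x \<le> ?s \<and> cub lam x = A"
    by (rule IVT2'[OF _ _ _ cont]) (use cub_s[OF assms(1)] assms sp in auto)
  then obtain z where z: "- ?s \<le> z" "z \<le> ?s" "cub lam z = A" by auto
  have "z \<noteq> ?s" using z cub_s[OF assms(1)] assms by auto
  moreover have "z \<noteq> - ?s" using z cub_s[OF assms(1)] assms by auto
  ultimately have z': "- ?s < z" "z < ?s" using z by auto
  have "z2 lam A = z" by (rule z2_char[OF assms(1) z' z(3)])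
  then show "- ?s < z2 lam A" "z2 lam A < ?s" "cub lam (z2 lam A) = A" using z' z by auto
qed

lemma z2_mono:
  assumes "lam > 0" "\<bar>A\<bar> < sqrt (2*lam/3) ^ 3" "\<bar>A'\<bar> < sqrt (2*lam/3) ^ 3" "A \<le> A'"
  shows "z2 lam A' \<le> z2 lam A"
proof (rule ccontr)
  assume "\<not> z2 lam A' \<le> z2 lam A"
  then have "cub lam (z2 lam A') < cub lam (z2 lam A)"
    using cub_strict_dec[of lam "z2 lam A" "z2 lam A'"] z2_props[OF assms(1,2)] z2_props[OF assms(1,3)] assms(1) by auto
  then show False using z2_props[OF assms(1,2)] z2_props[OF assms(1,3)] assms by auto
qed

lemma z2_cont:
  assumes "lam > 0" "0 \<le> M" "M < sqrt (2*lam/3) ^ 3"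
  shows "continuous_on {-M..M} (z2 lam)"
proof -
  let ?s = "sqrt (2*lam/3)"
  have hM: "\<bar>M\<bar> < ?s^3" "\<bar>-M\<bar> < ?s^3" using assms by auto
  define S where "S = {z2 lam M .. z2 lam (-M)}"
  have Ssub: "\<forall>z\<in>S. - ?s < z \<and> z < ?s"
    using z2_props[OF assms(1) hM(1)] z2_props[OF assms(1) hM(2)] by (auto simp: S_def)
  have cont: "continuous_on S (cub lam)" unfolding cub_def by (intro continuous_intros)
  have inv: "\<forall>z\<in>S. z2 lam (cub lam z) = z" using Ssub z2_char[OF assms(1)] by auto
  have img: "cub lam ` S = {-M..M}"
  proof
    show "cub lam ` S \<subseteq> {-M..M}"
    proof
      fix y assume "y \<in> cub lam ` S"
      then obtain z where z: "z \<in> S" "y = cub lam z" by auto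
      have zs: "- ?s < z" "z < ?s" using Ssub z(1) by auto
      have "cub lam z \<le> cub lam (z2 lam M)"
        using cub_dec[OF assms(1), of "z2 lam M" z] z zs z2_props[OF assms(1) hM(1)] by (auto simp: S_def)
      moreover have "cub lam (z2 lam (-M)) \<le> cub lam z"
        using cub_dec[OF assms(1), of z "z2 lam (-M)"] z zs z2_props[OF assms(1) hM(2)] by (auto simp: S_def)
      ultimately show "y \<in> {-M..M}" using z z2_props[OF assms(1) hM(1)] z2_props[OF assms(1) hM(2)] by auto
    qed
    show "{-M..M} \<subseteq> cub lam ` S"
    proof
      fix A assume A: "A \<in> {-M..M}"
      then have hA: "\<bar>A\<bar> < ?s^3" using assms by auto
      have "z2 lam A \<in> S" unfolding S_def
        using z2_mono[OF assms(1) hA hM(1)] z2_mono[OF assms(1) hM(2) hA] A by auto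
      moreover have "cub lam (z2 lam A) = A" using z2_props[OF assms(1) hA] by simp
      ultimately show "A \<in> cub lam ` S" by (metis image_eqI)
    qed
  qed
  have "continuous_on (cub lam ` S) (z2 lam)"
    by (rule continuous_on_inv[OF cont _ inv]) (simp add: S_def)
  then show ?thesis using img by simp
qed


definition Gf :: "(real \<Rightarrow> real) \<Rightarrow> nat \<Rightarrow> real \<Rightarrow> real \<Rightarrow> real" where
  "Gf f k R2 r = integral {R2..r} (\<lambda>\<rho>. f \<rho> * \<rho>^k)"

definition Qf :: "real \<Rightarrow> (real \<Rightarrow> real) \<Rightarrow> nat \<Rightarrow> real \<Rightarrow> real \<Rightarrow> real \<Rightarrow> real" where
  "Qf lam f k R2 r z = r^k * Hfun lam z + Gf f k R2 r * z"

definition Jf :: "real \<Rightarrow> (real \<Rightarrow> real) \<Rightarrow> nat \<Rightarrow> real \<Rightarrow> real \<Rightarrow> (real \<Rightarrow> real) \<Rightarrow> real" where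
  "Jf lam f k R2 R1 p = integral {R2..R1} (\<lambda>r. Qf lam f k R2 r (p r))"

lemma Q_expand:
  "Qf lam f k R2 r (z + d) - Qf lam f k R2 r z =
     d * (r^k * cub lam z + Gf f k R2 r) + d^2 * (r^k * (3*z^2/2 - lam)/2)
     + d^3 * (r^k * z / 2) + d^4 * (r^k / 8)"
  unfolding Qf_def Hfun_def cub_def by (simp add: field_simps power2_eq_square power3_eq_cube power4_eq_xxxx)

lemma int_zero_nonneg:
  fixes h :: "real \<Rightarrow> real"
  assumes "a < b" "continuous_on {a..b} h" "\<And>x. x \<in> {a..b} \<Longrightarrow> 0 \<le> h x" "integral {a..b} h = 0"
    and x: "x \<in> {a..b}"
  shows "h x = 0"
proof -
  have "(h has_integral 0) {a..b}"
    using integrable_continuous_interval[OF assms(2)] assms(4) by (metis has_integral_integral)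
  then show ?thesis
    using has_integral_0_cbox_imp_0[of a b h x] assms by auto
qed

lemma first_var:
  fixes a1 a2 a3 a4 e :: real
  assumes "e > 0" and H: "\<And>\<epsilon>. \<bar>\<epsilon>\<bar> < e \<Longrightarrow> \<epsilon>*a1 + \<epsilon>^2*a2 + \<epsilon>^3*a3 + \<epsilon>^4*a4 \<le> 0"
  shows "a1 = 0"
proof (rule ccontr)
  assume a1: "a1 \<noteq> 0"
  define C where "C = \<bar>a2\<bar> + \<bar>a3\<bar> + \<bar>a4\<bar>"
  define t where "t = min (e/2) (min (1/2) (\<bar>a1\<bar> / (2*(C+1))))"
  have C0: "C \<ge> 0" by (simp add: C_def)
  have tpos: "t > 0" unfolding t_def using assms a1 C0 by auto
  have te: "t < e" "t \<le> 1" unfolding t_def using assms by auto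
  have tC: "t * C < \<bar>a1\<bar>"
  proof -
    have "t * C \<le> (\<bar>a1\<bar> / (2*(C+1))) * C" using tpos C0 by (intro mult_right_mono) (auto simp: t_def)
    also have "\<dots> < \<bar>a1\<bar>" using a1 C0 by (simp add: field_simps) (use mult_nonneg_nonneg[OF C0 abs_ge_zero[of a1]] in linarith)
    finally show ?thesis .
  qed
  have bnd: "\<bar>\<epsilon>^2*a2 + \<epsilon>^3*a3 + \<epsilon>^4*a4\<bar> \<le> t^2 * C" if "\<bar>\<epsilon>\<bar> = t" for \<epsilon>
  proof -
    have "\<bar>\<epsilon>^2*a2 + \<epsilon>^3*a3 + \<epsilon>^4*a4\<bar> \<le> t^2*\<bar>a2\<bar> + t^3*\<bar>a3\<bar> + t^4*\<bar>a4\<bar>"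
    proof -
      have "\<bar>\<epsilon>^2*a2\<bar> = t^2*\<bar>a2\<bar>" "\<bar>\<epsilon>^3*a3\<bar> = t^3*\<bar>a3\<bar>" "\<bar>\<epsilon>^4*a4\<bar> = t^4*\<bar>a4\<bar>"
        using that by (simp_all add: abs_mult power_abs)
      then show ?thesis by (smt (verit))
    qed
    also have "\<dots> \<le> t^2*\<bar>a2\<bar> + t^2*\<bar>a3\<bar> + t^2*\<bar>a4\<bar>"
    proof -
      have "t^3 \<le> t^2" "t^4 \<le> t^2" using te tpos by (auto intro: power_decreasing)
      then show ?thesis by (intro add_mono mult_right_mono) auto
    qed
    finally show ?thesis by (simp add: C_def algebra_simps)
  qed
  show False
  proof (cases "a1 > 0")
    case True
    have "t*a1 + t^2*a2 + t^3*a3 + t^4*a4 \<le> 0" using H[of t] te tpos by simp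
    moreover have "t^2*a2 + t^3*a3 + t^4*a4 \<ge> - (t^2 * C)" using bnd[of t] tpos by auto
    ultimately have "t * a1 \<le> t * (t * C)" by (simp add: power2_eq_square algebra_simps)
    then have "a1 \<le> t * C" using tpos by simp
    then show False using tC True by simp
  next
    case False
    then have neg: "a1 < 0" using a1 by simp
    have "(-t)*a1 + (-t)^2*a2 + (-t)^3*a3 + (-t)^4*a4 \<le> 0" using H[of "-t"] te tpos by simp
    moreover have "(-t)^2*a2 + (-t)^3*a3 + (-t)^4*a4 \<ge> - (t^2 * C)" using bnd[of "-t"] tpos by auto
    ultimately have m: "t * (-a1) \<le> t * (t * C)" by (simp add: power2_eq_square algebra_simps)
    have "-a1 \<le> t * C" by (rule mult_left_le_imp_le[OF m]) (use tpos in simp)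
    then show False using tC neg by simp
  qed
qed

lemma second_var:
  fixes a2 a3 a4 e :: real
  assumes "e > 0" and H: "\<And>\<epsilon>. \<bar>\<epsilon>\<bar> < e \<Longrightarrow> 0 \<le> \<epsilon>^2*a2 + \<epsilon>^3*a3 + \<epsilon>^4*a4"
  shows "a2 \<ge> 0"
proof (rule ccontr)
  assume "\<not> a2 \<ge> 0"
  then have a2: "a2 < 0" by simp
  define C where "C = \<bar>a3\<bar> + \<bar>a4\<bar>"
  define t where "t = min (e/2) (min (1/2) (\<bar>a2\<bar> / (2*(C+1))))"
  have C0: "C \<ge> 0" by (simp add: C_def)
  have "\<bar>a2\<bar> / (2*(C+1)) > 0" using a2 C0 by (intro divide_pos_pos) auto
  then have tpos: "t > 0" unfolding t_def using assms by auto
  have te: "t < e" "t \<le> 1" unfolding t_def using assms by auto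
  have tC: "t * C < \<bar>a2\<bar>"
  proof -
    have "t * C \<le> (\<bar>a2\<bar> / (2*(C+1))) * C" using tpos C0 by (intro mult_right_mono) (auto simp: t_def)
    also have "\<dots> < \<bar>a2\<bar>" using a2 C0 by (simp add: field_simps) (use mult_nonneg_nonneg[OF C0 abs_ge_zero[of a2]] in linarith)
    finally show ?thesis .
  qed
  have "t^3*a3 + t^4*a4 \<le> t^3*\<bar>a3\<bar> + t^3*\<bar>a4\<bar>"
  proof -
    have "t^4 \<le> t^3" using te tpos by (auto intro: power_decreasing)
    then have "t^4*a4 \<le> t^3*\<bar>a4\<bar>"
      by (smt (verit) mult_right_mono abs_ge_self abs_ge_zero mult_left_mono tpos zero_le_power less_imp_le)
    moreover have "t^3*a3 \<le> t^3*\<bar>a3\<bar>" using tpos by (intro mult_left_mono) auto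
    ultimately show ?thesis by simp
  qed
  moreover have "0 \<le> t^2*a2 + t^3*a3 + t^4*a4" using H[of t] te tpos by simp
  ultimately have m: "t^2 * (-a2) \<le> t^2 * (t * C)" by (simp add: C_def power2_eq_square power3_eq_cube algebra_simps)
  have "-a2 \<le> t * C" by (rule mult_left_le_imp_le[OF m]) (use tpos in simp)
  then show False using tC a2 by simp
qed


definition Ff :: "nat \<Rightarrow> real \<Rightarrow> (real \<Rightarrow> real) \<Rightarrow> real \<Rightarrow> real" where
  "Ff k R2 f r = - (1 / r^k) * Gf f k R2 r"

lemma Q_diff2: fixes a d w lam :: real shows
 "d^2*(a*(3*w^2/2 - lam)/2) + d^3*(a*w/2) + d^4*(a/8) = a*d^2*((3*w^2/2-lam)/2 + w*d/2 + d^2/8)"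
  by (simp add: field_simps power2_eq_square power3_eq_cube power4_eq_xxxx)

context
  fixes R1 R2 lam :: real and f :: "real \<Rightarrow> real" and k :: nat
  assumes R: "0 < R2" "R2 < R1" and lam: "0 < lam" and fc: "continuous_on {R2..R1} f"
    and fint: "integral {R2..R1} (\<lambda>r. r^k * f r) = 0"
    and fbd: "integral {R2..R1} (\<lambda>r. \<bar>r^k * f r\<bar>) < R2^k * (2*lam/3) powr (3/2)"
begin

lemma fk_cont: "continuous_on {R2..R1} (\<lambda>\<rho>. f \<rho> * \<rho>^k)"
  by (intro continuous_intros fc)

lemma G_deriv: "r \<in> {R2..R1} \<Longrightarrow> (Gf f k R2 has_real_derivative f r * r^k) (at r within {R2..R1})"
  unfolding Gf_def[abs_def] has_real_derivative_iff_has_vector_derivative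
  by (rule integral_has_vector_derivative[OF fk_cont])

lemma G_cont: "continuous_on {R2..R1} (Gf f k R2)"
  by (rule DERIV_continuous_on[OF G_deriv])

lemma G_R2: "Gf f k R2 R2 = 0"
  unfolding Gf_def by simp

lemma G_R1: "Gf f k R2 R1 = 0"
  unfolding Gf_def using fint by (simp add: mult.commute)

lemma Ff_endpoints: "Ff k R2 f R2 = 0" "Ff k R2 f R1 = 0"
  by (simp_all add: Ff_def G_R2 G_R1)

lemma G_eq_F: "r \<in> {R2..R1} \<Longrightarrow> Gf f k R2 r = - (r^k * Ff k R2 f r)"
  using R by (auto simp: Ff_def)

lemma F_bound: "r \<in> {R2..R1} \<Longrightarrow> \<bar>Ff k R2 f r\<bar> < sqrt (2*lam/3) ^ 3"
proof -
  assume r: "r \<in> {R2..R1}"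
  have rpos: "r > 0" using r R by auto
  have int1: "(\<lambda>\<rho>. f \<rho> * \<rho>^k) integrable_on {R2..r}"
    using integrable_continuous_interval[OF fk_cont] r by (auto intro: integrable_subinterval_real)
  have ac: "continuous_on {R2..R1} (\<lambda>\<rho>. \<bar>\<rho>^k * f \<rho>\<bar>)" by (intro continuous_intros fc)
  have int2: "(\<lambda>\<rho>. \<bar>\<rho>^k * f \<rho>\<bar>) integrable_on {R2..R1}" by (rule integrable_continuous_interval[OF ac])
  have int3: "(\<lambda>\<rho>. \<bar>\<rho>^k * f \<rho>\<bar>) integrable_on {R2..r}"
    using int2 r by (auto intro: integrable_subinterval_real)
  have "\<bar>Gf f k R2 r\<bar> \<le> integral {R2..r} (\<lambda>\<rho>. \<bar>\<rho>^k * f \<rho>\<bar>)"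
    unfolding Gf_def using integral_norm_bound_integral[OF int1 int3] by (simp add: abs_mult mult.commute)
  also have "\<dots> \<le> integral {R2..R1} (\<lambda>\<rho>. \<bar>\<rho>^k * f \<rho>\<bar>)"
    by (rule integral_subset_le[OF _ int3 int2]) (use r in auto)
  also have "\<dots> < R2^k * sqrt (2*lam/3) ^ 3" using fbd B_eq[OF lam] by simp
  also have "\<dots> \<le> r^k * sqrt (2*lam/3) ^ 3"
    using r R lam by (intro mult_right_mono power_mono) auto
  finally have "\<bar>Gf f k R2 r\<bar> < r^k * sqrt (2*lam/3) ^ 3" .
  then show ?thesis using rpos by (simp add: Ff_def abs_mult field_simps)
qed

lemma F_cont: "continuous_on {R2..R1} (Ff k R2 f)"
proof -
  have "continuous_on {R2..R1} (\<lambda>r::real. 1 / r^k)"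
    by (rule continuous_on_divide) (use R in \<open>auto intro!: continuous_intros\<close>)
  then have "continuous_on {R2..R1} (\<lambda>r. - (1 / r^k) * Gf f k R2 r)"
    by (intro continuous_on_mult continuous_on_minus G_cont)
  then show ?thesis unfolding Ff_def[abs_def] .
qed

lemma F_max: "\<exists>M. 0 \<le> M \<and> M < sqrt (2*lam/3) ^ 3 \<and> (\<forall>r\<in>{R2..R1}. \<bar>Ff k R2 f r\<bar> \<le> M)"
proof -
  have "continuous_on {R2..R1} (\<lambda>r. \<bar>Ff k R2 f r\<bar>)" by (intro continuous_intros F_cont)
  moreover have "compact {R2..R1}" "{R2..R1} \<noteq> {}" using R by auto
  ultimately obtain r0 where r0: "r0 \<in> {R2..R1}" "\<forall>r\<in>{R2..R1}. \<bar>Ff k R2 f r\<bar> \<le> \<bar>Ff k R2 f r0\<bar>"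
    using continuous_attains_sup[of "{R2..R1}" "\<lambda>r. \<bar>Ff k R2 f r\<bar>"] by blast
  then show ?thesis using F_bound[OF r0(1)] by (intro exI[of _ "\<bar>Ff k R2 f r0\<bar>"]) auto
qed

lemma zF_cont: "continuous_on {R2..R1} (\<lambda>r. z2 lam (Ff k R2 f r))"
proof -
  obtain M where M: "0 \<le> M" "M < sqrt (2*lam/3) ^ 3" "\<forall>r\<in>{R2..R1}. \<bar>Ff k R2 f r\<bar> \<le> M"
    using F_max by blast
  show ?thesis
  proof (rule continuous_on_compose2[OF z2_cont[OF lam M(1,2)] F_cont])
    show "Ff k R2 f ` {R2..R1} \<subseteq> {-M..M}"
    proof
      fix y assume "y \<in> Ff k R2 f ` {R2..R1}"
      then obtain x where x: "x \<in> {R2..R1}" "y = Ff k R2 f x" by auto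
      have "\<bar>Ff k R2 f x\<bar> \<le> M" using M(3) x(1) by blast
      then show "y \<in> {-M..M}" using x by (simp add: abs_le_iff)
    qed
  qed
qed

lemma zF_props: "r \<in> {R2..R1} \<Longrightarrow> - sqrt (2*lam/3) < z2 lam (Ff k R2 f r) \<and> z2 lam (Ff k R2 f r) < sqrt (2*lam/3)
   \<and> cub lam (z2 lam (Ff k R2 f r)) = Ff k R2 f r"
  using z2_props[OF lam F_bound] by blast

lemma pointwise_max:
  "\<exists>e0>0. \<forall>r\<in>{R2..R1}. \<forall>z. \<bar>z - z2 lam (Ff k R2 f r)\<bar> < e0 \<longrightarrow>
       Qf lam f k R2 r z \<le> Qf lam f k R2 r (z2 lam (Ff k R2 f r))"
proof -
  let ?s = "sqrt (2*lam/3)"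
  obtain M where M: "0 \<le> M" "M < ?s ^ 3" "\<forall>r\<in>{R2..R1}. \<bar>Ff k R2 f r\<bar> \<le> M"
    using F_max by blast
  have hM: "\<bar>M\<bar> < ?s^3" "\<bar>-M\<bar> < ?s^3" using M by auto
  define b0 where "b0 = max \<bar>z2 lam M\<bar> \<bar>z2 lam (-M)\<bar>"
  have b0s: "b0 < ?s" "0 \<le> b0" using z2_props[OF lam hM(1)] z2_props[OF lam hM(2)] by (auto simp: b0_def)
  have wb: "\<bar>z2 lam (Ff k R2 f r)\<bar> \<le> b0" if r: "r \<in> {R2..R1}" for r
  proof -
    have hA: "\<bar>Ff k R2 f r\<bar> < ?s^3" by (rule F_bound[OF r])
    have FM: "\<bar>Ff k R2 f r\<bar> \<le> M" using M(3) r by blast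
    have "z2 lam M \<le> z2 lam (Ff k R2 f r)" using z2_mono[OF lam hA hM(1)] FM by (simp add: abs_le_iff)
    moreover have "z2 lam (Ff k R2 f r) \<le> z2 lam (-M)" using z2_mono[OF lam hM(2) hA] FM by (simp add: abs_le_iff)
    ultimately show ?thesis unfolding b0_def by auto
  qed
  define \<kappa> where "\<kappa> = lam - 3 * b0^2 / 2"
  have "b0^2 < ?s^2" using b0s by (intro power_strict_mono) auto
  then have kp: "\<kappa> > 0" using lam by (simp add: \<kappa>_def)
  define e0 where "e0 = min 1 (\<kappa> / (b0 + 1))"
  have e0p: "e0 > 0" unfolding e0_def using kp b0s by auto
  have e0a: "e0 \<le> 1" by (simp add: e0_def)
  have e0b: "e0 * (b0 + 1) \<le> \<kappa>"
  proof -
    have "e0 \<le> \<kappa> / (b0 + 1)" by (simp add: e0_def)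
    then show ?thesis using b0s by (simp add: pos_le_divide_eq)
  qed
  note e01 = e0a e0b
  show ?thesis
  proof (intro exI[of _ e0] conjI e0p ballI allI impI)
    fix r z assume r: "r \<in> {R2..R1}" and z: "\<bar>z - z2 lam (Ff k R2 f r)\<bar> < e0"
    define w where "w = z2 lam (Ff k R2 f r)"
    define d where "d = z - w"
    have rk: "r^k > 0" using r R by auto
    have cw: "cub lam w = Ff k R2 f r" using zF_props[OF r] by (simp add: w_def)
    have lin: "r^k * cub lam w + Gf f k R2 r = 0" using cw G_eq_F[OF r] by simp
    have dd: "\<bar>d\<bar> < e0" using z by (simp add: d_def w_def)
    have wb': "\<bar>w\<bar> \<le> b0" using wb[OF r] by (simp add: w_def)
    have "w^2 \<le> b0^2" using wb' by (metis abs_le_square_iff abs_of_nonneg b0s(2))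
    then have t1: "(3*w^2/2 - lam)/2 \<le> - \<kappa>/2" by (simp add: \<kappa>_def)
    define ad where "ad = \<bar>d\<bar>"
    have t2: "w * d / 2 \<le> b0 * ad / 2"
    proof -
      have "w * d \<le> \<bar>w\<bar> * ad" unfolding ad_def by (metis abs_ge_self abs_mult)
      also have "\<dots> \<le> b0 * ad" using wb' ad_def by (intro mult_right_mono) auto
      finally show ?thesis by simp
    qed
    have t3: "d^2 / 8 \<le> ad / 8"
    proof -
      have "d^2 = ad * ad" unfolding ad_def by (simp add: power2_eq_square abs_mult_self_eq)
      also have "\<dots> \<le> ad * 1" using dd e01 ad_def by (intro mult_left_mono) auto
      finally show ?thesis by simp
    qed
    have t4: "ad * (b0/2 + 1/8) \<le> \<kappa>/2"
    proof -
      have "ad * (b0/2 + 1/8) \<le> e0 * (b0/2 + 1/8)" using dd b0s ad_def by (intro mult_right_mono) auto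
      also have "\<dots> \<le> e0 * (b0 + 1) / 2" using e0p b0s by (simp add: field_simps)
      also have "\<dots> \<le> \<kappa>/2" using e01 by simp
      finally show ?thesis .
    qed
    have br: "(3*w^2/2 - lam)/2 + w * d / 2 + d^2/8 \<le> 0" using t1 t2 t3 t4 by argo
    have "Qf lam f k R2 r z - Qf lam f k R2 r w = r^k * d^2 * ((3*w^2/2 - lam)/2 + w * d / 2 + d^2/8)"
    proof -
      have zz: "z = w + d" by (simp add: d_def)
      have "Qf lam f k R2 r z - Qf lam f k R2 r w = d^2*(r^k*(3*w^2/2 - lam)/2) + d^3*(r^k*w/2) + d^4*(r^k/8)"
        unfolding zz Q_expand lin by simp
      also have "\<dots> = r^k * d^2 * ((3*w^2/2 - lam)/2 + w * d / 2 + d^2/8)"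
        by (rule Q_diff2)
      finally show ?thesis .
    qed
    also have "\<dots> \<le> 0" using rk br by (intro mult_nonneg_nonpos) auto
    finally show "Qf lam f k R2 r z \<le> Qf lam f k R2 r (z2 lam (Ff k R2 f r))" by (simp add: w_def)
  qed
qed


lemma crit_z2:
  assumes pc: "continuous_on {R2..R1} p" and p0: "p R2 = 0" "p R1 = 0"
    and crit: "\<forall>r\<in>{R2<..<R1}. r^k * cub lam (p r) + Gf f k R2 r = 0"
  shows "\<forall>r\<in>{R2..R1}. p r = z2 lam (Ff k R2 f r)"
proof -
  let ?s = "sqrt (2*lam/3)"
  have sp: "?s > 0" using lam by simp
  have cubF: "cub lam (p r) = Ff k R2 f r" if r: "r \<in> {R2..R1}" for r
  proof (cases "r = R2 \<or> r = R1")
    case True then show ?thesis using p0 Ff_endpoints by (auto simp: cub_def)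
  next
    case False
    then have "r \<in> {R2<..<R1}" using r by auto
    then have "r^k * cub lam (p r) + Gf f k R2 r = 0" using crit by blast
    then have "r^k * cub lam (p r) = r^k * Ff k R2 f r" using G_eq_F[OF r] by simp
    moreover have "r^k \<noteq> 0" using r R by auto
    ultimately show ?thesis by (metis mult_left_cancel)
  qed
  have small: "\<bar>p r\<bar> < ?s" if r: "r \<in> {R2..R1}" for r
  proof (rule ccontr)
    assume nr: "\<not> \<bar>p r\<bar> < ?s"
    have cont: "continuous_on {R2..r} (\<lambda>x. \<bar>p x\<bar>)"
      by (intro continuous_intros continuous_on_subset[OF pc]) (use r in auto)
    have "\<exists>x\<ge>R2. x \<le> r \<and> \<bar>p x\<bar> = ?s"
      by (rule IVT'[OF _ _ _ cont]) (use p0 nr sp r in auto)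
    then obtain \<rho> where \<rho>: "R2 \<le> \<rho>" "\<rho> \<le> r" "\<bar>p \<rho>\<bar> = ?s" by blast
    have \<rho>r: "\<rho> \<in> {R2..R1}" using \<rho> r by auto
    have "p \<rho> = ?s \<or> p \<rho> = - ?s" using \<rho>(3) by (auto simp: abs_if split: if_splits)
    then have "\<bar>cub lam (p \<rho>)\<bar> = ?s^3" using cub_s[OF lam] sp by auto
    then show False using cubF[OF \<rho>r] F_bound[OF \<rho>r] by simp
  qed
  show ?thesis
  proof
    fix r assume r: "r \<in> {R2..R1}"
    show "p r = z2 lam (Ff k R2 f r)"
      using z2_char[OF lam _ _ cubF[OF r]] small[OF r] by (simp add: abs_less_iff)
  qed
qed

lemma Q_cont: "continuous_on {R2..R1} p \<Longrightarrow> continuous_on {R2..R1} (\<lambda>r. Qf lam f k R2 r (p r))"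
  unfolding Qf_def Hfun_def by (intro continuous_intros G_cont)

lemma J_pert:
  assumes pc: "continuous_on {R2..R1} p" and qc: "continuous_on {R2..R1} \<psi>"
  shows "Jf lam f k R2 R1 (\<lambda>r. p r + \<epsilon> * \<psi> r) - Jf lam f k R2 R1 p =
    \<epsilon> * integral {R2..R1} (\<lambda>r. (r^k * cub lam (p r) + Gf f k R2 r) * \<psi> r)
    + \<epsilon>^2 * integral {R2..R1} (\<lambda>r. r^k * (3*(p r)^2/2 - lam)/2 * (\<psi> r)^2)
    + \<epsilon>^3 * integral {R2..R1} (\<lambda>r. r^k * p r / 2 * (\<psi> r)^3)
    + \<epsilon>^4 * integral {R2..R1} (\<lambda>r. r^k / 8 * (\<psi> r)^4)"
proof -
  have pec: "continuous_on {R2..R1} (\<lambda>r. p r + \<epsilon> * \<psi> r)" by (intro continuous_intros pc qc)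
  define A1 where "A1 = (\<lambda>r. (r^k * cub lam (p r) + Gf f k R2 r) * \<psi> r)"
  define A2 where "A2 = (\<lambda>r. r^k * (3*(p r)^2/2 - lam)/2 * (\<psi> r)^2)"
  define A3 where "A3 = (\<lambda>r. r^k * p r / 2 * (\<psi> r)^3)"
  define A4 where "A4 = (\<lambda>r::real. r^k / 8 * (\<psi> r)^4)"
  have i1: "A1 integrable_on {R2..R1}" unfolding A1_def cub_def
    by (intro integrable_continuous_interval continuous_intros G_cont pc qc)
  have i2: "A2 integrable_on {R2..R1}" unfolding A2_def
    by (auto intro!: integrable_continuous_interval continuous_intros pc qc)
  have i3: "A3 integrable_on {R2..R1}" unfolding A3_def
    by (auto intro!: integrable_continuous_interval continuous_intros pc qc)
  have i4: "A4 integrable_on {R2..R1}" unfolding A4_def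
    by (auto intro!: integrable_continuous_interval continuous_intros pc qc)
  have "Jf lam f k R2 R1 (\<lambda>r. p r + \<epsilon> * \<psi> r) - Jf lam f k R2 R1 p =
     integral {R2..R1} (\<lambda>r. Qf lam f k R2 r (p r + \<epsilon> * \<psi> r) - Qf lam f k R2 r (p r))"
    unfolding Jf_def
    by (rule integral_diff[symmetric]; rule integrable_continuous_interval; rule Q_cont; (rule pec | rule pc))
  also have "\<dots> = integral {R2..R1} (\<lambda>r. \<epsilon> * A1 r + \<epsilon>^2 * A2 r + \<epsilon>^3 * A3 r + \<epsilon>^4 * A4 r)"
  proof (rule integral_cong)
    fix r assume "r \<in> {R2..R1}"
    show "Qf lam f k R2 r (p r + \<epsilon> * \<psi> r) - Qf lam f k R2 r (p r) = \<epsilon> * A1 r + \<epsilon>^2 * A2 r + \<epsilon>^3 * A3 r + \<epsilon>^4 * A4 r"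
      unfolding Q_expand A1_def A2_def A3_def A4_def by (simp add: power_mult_distrib algebra_simps)
  qed
  also have "\<dots> = \<epsilon> * integral {R2..R1} A1 + \<epsilon>^2 * integral {R2..R1} A2 + \<epsilon>^3 * integral {R2..R1} A3 + \<epsilon>^4 * integral {R2..R1} A4"
  proof -
    have "((\<lambda>r. \<epsilon> * A1 r + \<epsilon>^2 * A2 r + \<epsilon>^3 * A3 r + \<epsilon>^4 * A4 r) has_integral
      (\<epsilon> * integral {R2..R1} A1 + \<epsilon>^2 * integral {R2..R1} A2 + \<epsilon>^3 * integral {R2..R1} A3 + \<epsilon>^4 * integral {R2..R1} A4)) {R2..R1}"
      by (intro has_integral_add has_integral_mult_right integrable_integral i1 i2 i3 i4)
    then show ?thesis by (rule integral_unique)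
  qed
  finally show ?thesis unfolding A1_def A2_def A3_def A4_def .
qed


lemma Ifun_eq:
  fixes u :: "real^'n \<Rightarrow> real"
  assumes kn: "k = CARD('n) - 1" and C1: "C1_on_with R2 R1 v v'"
    and ueq: "\<forall>y\<in>cl_annulus R2 R1. u y = v (norm y)"
  shows "Ifun lam R2 R1 f u = (real CARD('n) * unit_ball_vol (CARD('n))) * Jf lam f k R2 R1 v'"
proof -
  have vc: "continuous_on {R2..R1} v" by (rule C1_cont[OF C1])
  have v'c: "continuous_on {R2..R1} v'" using C1 by (simp add: C1_on_with_def)
  define h where "h = (\<lambda>r. Hfun lam (v' r) - f r * v r)"
  have hc: "continuous_on {R2..R1} h" unfolding h_def Hfun_def by (intro continuous_intros v'c vc fc)
  have "Ifun lam R2 R1 f u = integral (annulus R2 R1 :: (real^'n) set) (\<lambda>x. h (norm x))"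
    unfolding Ifun_def
  proof (rule integral_cong)
    fix x :: "real^'n" assume x: "x \<in> annulus R2 R1"
    then have xc: "x \<in> cl_annulus R2 R1" by (auto simp: annulus_def cl_annulus_def)
    show "Hfun lam (norm (grad R2 R1 u x)) - f (norm x) * u x = h (norm x)"
      using grad_norm_eq[OF R C1 ueq xc] ueq xc by (simp add: h_def Hfun_def)
  qed
  also have "\<dots> = (real CARD('n) * unit_ball_vol (CARD('n))) * integral {R2..R1} (\<lambda>r. r^(CARD('n)-1) * h r)"
    by (rule radial_integral[OF R hc])
  also have "integral {R2..R1} (\<lambda>r. r^(CARD('n)-1) * h r) = Jf lam f k R2 R1 v'"
  proof -
    have i1: "(\<lambda>r. r^k * Hfun lam (v' r)) integrable_on {R2..R1}" unfolding Hfun_def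
      by (intro integrable_continuous_interval continuous_intros v'c)
    have i2: "(\<lambda>r. Gf f k R2 r * v' r) integrable_on {R2..R1}"
      by (intro integrable_continuous_interval continuous_intros v'c G_cont)
    have i3: "(\<lambda>r. f r * r^k * v r) integrable_on {R2..R1}"
      by (intro integrable_continuous_interval continuous_intros vc fc)
    have d: "((\<lambda>r. f r * r^k * v r + Gf f k R2 r * v' r) has_integral 0) {R2..R1}"
    proof -
      have "((\<lambda>r. f r * r^k * v r + Gf f k R2 r * v' r) has_integral (Gf f k R2 R1 * v R1 - Gf f k R2 R2 * v R2)) {R2..R1}"
      proof (rule fundamental_theorem_of_calculus)
        show "R2 \<le> R1" using R by simp
        fix r assume r: "r \<in> {R2..R1}"
        have vd: "(v has_real_derivative v' r) (at r within {R2..R1})" using C1 r by (simp add: C1_on_with_def)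
        have "((\<lambda>r. Gf f k R2 r * v r) has_real_derivative (f r * r^k) * v r + v' r * Gf f k R2 r) (at r within {R2..R1})"
          by (rule DERIV_mult[OF G_deriv[OF r] vd])
        then show "((\<lambda>r. Gf f k R2 r * v r) has_vector_derivative f r * r^k * v r + Gf f k R2 r * v' r) (at r within {R2..R1})"
          by (simp add: has_real_derivative_iff_has_vector_derivative[symmetric] algebra_simps)
      qed
      then show ?thesis by (simp add: G_R1 G_R2)
    qed
    have e3: "integral {R2..R1} (\<lambda>r. f r * r^k * v r) = - integral {R2..R1} (\<lambda>r. Gf f k R2 r * v' r)"
    proof -
      have "integral {R2..R1} (\<lambda>r. f r * r^k * v r + Gf f k R2 r * v' r) = 0" using d by (rule integral_unique)
      then show ?thesis using integral_add[OF i3 i2] by simp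
    qed
    have "integral {R2..R1} (\<lambda>r. r^(CARD('n)-1) * h r) = integral {R2..R1} (\<lambda>r. r^k * Hfun lam (v' r) - f r * r^k * v r)"
      by (rule integral_cong) (simp add: h_def kn algebra_simps)
    also have "\<dots> = integral {R2..R1} (\<lambda>r. r^k * Hfun lam (v' r)) - integral {R2..R1} (\<lambda>r. f r * r^k * v r)"
      by (rule integral_diff[OF i1 i3])
    also have "\<dots> = integral {R2..R1} (\<lambda>r. r^k * Hfun lam (v' r)) + integral {R2..R1} (\<lambda>r. Gf f k R2 r * v' r)"
      using e3 by simp
    also have "\<dots> = integral {R2..R1} (\<lambda>r. r^k * Hfun lam (v' r) + Gf f k R2 r * v' r)"
      by (rule integral_add[OF i1 i2, symmetric])
    also have "\<dots> = Jf lam f k R2 R1 v'" by (simp add: Jf_def Qf_def)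
    finally show ?thesis .
  qed
  finally show ?thesis .
qed


lemma perturb:
  fixes u :: "real^'n \<Rightarrow> real" and \<sigma> :: real
  assumes kn: "k = CARD('n) - 1" and C1: "C1_on_with R2 R1 v v'" and v0: "v' R1 = 0" "v' R2 = 0"
    and ueq: "\<forall>y\<in>cl_annulus R2 R1. u y = v (norm y)"
    and \<psi>c: "continuous_on {R2..R1} \<psi>" and \<psi>0: "\<psi> R1 = 0" "\<psi> R2 = 0"
    and e: "e > 0"
    and loc: "\<forall>w\<in>Uspace R2 R1. normU R2 R1 (\<lambda>x. w x - u x) < e \<longrightarrow>
                 \<sigma> * Ifun lam R2 R1 f w \<le> \<sigma> * Ifun lam R2 R1 f u"
  shows "\<exists>e'>0. \<forall>\<epsilon>. \<bar>\<epsilon>\<bar> < e' \<longrightarrow> \<sigma> * (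
    \<epsilon> * integral {R2..R1} (\<lambda>r. (r^k * cub lam (v' r) + Gf f k R2 r) * \<psi> r)
    + \<epsilon>^2 * integral {R2..R1} (\<lambda>r. r^k * (3*(v' r)^2/2 - lam)/2 * (\<psi> r)^2)
    + \<epsilon>^3 * integral {R2..R1} (\<lambda>r. r^k * v' r / 2 * (\<psi> r)^3)
    + \<epsilon>^4 * integral {R2..R1} (\<lambda>r. r^k / 8 * (\<psi> r)^4)) \<le> 0"
proof -
  define \<Phi> where "\<Phi> = (\<lambda>r. integral {R2..r} \<psi>)"
  have \<Phi>d: "(\<Phi> has_real_derivative \<psi> r) (at r within {R2..R1})" if "r \<in> {R2..R1}" for r
    unfolding \<Phi>_def has_real_derivative_iff_has_vector_derivative
    by (rule integral_has_vector_derivative[OF \<psi>c that])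
  have \<Phi>c: "continuous_on {R2..R1} \<Phi>" by (rule DERIV_continuous_on[OF \<Phi>d])
  obtain M1 where M1: "M1 \<ge> 0" "\<forall>r\<in>{R2..R1}. \<bar>\<Phi> r\<bar> \<le> M1" using cont_bound[OF \<Phi>c] by blast
  obtain M2 where M2: "M2 \<ge> 0" "\<forall>r\<in>{R2..R1}. \<bar>\<psi> r\<bar> \<le> M2" using cont_bound[OF \<psi>c] by blast
  define K where "K = real CARD('n) * unit_ball_vol (CARD('n))"
  have Kp: "K > 0" unfolding K_def by simp
  have v'c: "continuous_on {R2..R1} v'" using C1 by (simp add: C1_on_with_def)
  define e' where "e' = e / (M1 + M2 + 1)"
  have e'p: "e' > 0" unfolding e'_def using e M1 M2 by simp
  show ?thesis
  proof (intro exI[of _ e'] conjI allI impI e'p)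
    fix \<epsilon> :: real assume \<epsilon>: "\<bar>\<epsilon>\<bar> < e'"
    define w where "w = (\<lambda>x. u x + \<epsilon> * \<Phi> (norm x))"
    have C1w: "C1_on_with R2 R1 (\<lambda>r. v r + \<epsilon> * \<Phi> r) (\<lambda>r. v' r + \<epsilon> * \<psi> r)"
      using C1 unfolding C1_on_with_def
      by (auto intro!: continuous_intros \<psi>c DERIV_add DERIV_cmult \<Phi>d)
    have weq: "\<forall>y\<in>cl_annulus R2 R1. w y = v (norm y) + \<epsilon> * \<Phi> (norm y)" using ueq by (simp add: w_def)
    have wU: "w \<in> Uspace R2 R1" unfolding Uspace_def mem_Collect_eq
      by (intro exI[of _ "\<lambda>r. v r + \<epsilon> * \<Phi> r"] exI[of _ "\<lambda>r. v' r + \<epsilon> * \<psi> r"])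
         (use C1w weq v0 \<psi>0 in auto)
    have C1d: "C1_on_with R2 R1 (\<lambda>r. \<epsilon> * \<Phi> r) (\<lambda>r. \<epsilon> * \<psi> r)"
      unfolding C1_on_with_def by (auto intro!: continuous_intros \<psi>c DERIV_cmult \<Phi>d)
    have "normU R2 R1 (\<lambda>x. w x - u x) \<le> \<bar>\<epsilon>\<bar> * M1 + \<bar>\<epsilon>\<bar> * M2"
    proof (rule normU_upper[OF R C1d])
      show "\<forall>y\<in>cl_annulus R2 R1. w y - u y = \<epsilon> * \<Phi> (norm y)" by (simp add: w_def)
      show "\<forall>r\<in>{R2..R1}. \<bar>\<epsilon> * \<Phi> r\<bar> \<le> \<bar>\<epsilon>\<bar> * M1" using M1 by (simp add: abs_mult mult_left_mono)
      show "\<forall>r\<in>{R2..R1}. \<bar>\<epsilon> * \<psi> r\<bar> \<le> \<bar>\<epsilon>\<bar> * M2" using M2 by (simp add: abs_mult mult_left_mono)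
    qed
    also have "\<dots> < e"
    proof -
      have "\<bar>\<epsilon>\<bar> * M1 + \<bar>\<epsilon>\<bar> * M2 \<le> \<bar>\<epsilon>\<bar> * (M1 + M2 + 1)" by (simp add: algebra_simps)
      also have "\<dots> < e' * (M1 + M2 + 1)" using \<epsilon> M1 M2 by (intro mult_strict_right_mono) auto
      also have "\<dots> = e" unfolding e'_def using M1 M2 by simp
      finally show ?thesis .
    qed
    finally have "\<sigma> * Ifun lam R2 R1 f w \<le> \<sigma> * Ifun lam R2 R1 f u" using loc wU by blast
    moreover have "Ifun lam R2 R1 f w = K * Jf lam f k R2 R1 (\<lambda>r. v' r + \<epsilon> * \<psi> r)"
      unfolding K_def by (rule Ifun_eq[OF kn C1w weq])
    moreover have "Ifun lam R2 R1 f u = K * Jf lam f k R2 R1 v'"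
      unfolding K_def by (rule Ifun_eq[OF kn C1 ueq])
    ultimately have "K * (\<sigma> * (Jf lam f k R2 R1 (\<lambda>r. v' r + \<epsilon> * \<psi> r) - Jf lam f k R2 R1 v')) \<le> 0"
      by (simp add: algebra_simps)
    then have "\<sigma> * (Jf lam f k R2 R1 (\<lambda>r. v' r + \<epsilon> * \<psi> r) - Jf lam f k R2 R1 v') \<le> 0"
      using Kp by (simp add: mult_le_0_iff)
    then show "\<sigma> * (
    \<epsilon> * integral {R2..R1} (\<lambda>r. (r^k * cub lam (v' r) + Gf f k R2 r) * \<psi> r)
    + \<epsilon>^2 * integral {R2..R1} (\<lambda>r. r^k * (3*(v' r)^2/2 - lam)/2 * (\<psi> r)^2)
    + \<epsilon>^3 * integral {R2..R1} (\<lambda>r. r^k * v' r / 2 * (\<psi> r)^3)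
    + \<epsilon>^4 * integral {R2..R1} (\<lambda>r. r^k / 8 * (\<psi> r)^4)) \<le> 0"
      unfolding J_pert[OF v'c \<psi>c] .
  qed
qed


lemma crit_from_loc:
  fixes u :: "real^'n \<Rightarrow> real" and \<sigma> :: real
  assumes kn: "k = CARD('n) - 1" and C1: "C1_on_with R2 R1 v v'" and v0: "v' R1 = 0" "v' R2 = 0"
    and ueq: "\<forall>y\<in>cl_annulus R2 R1. u y = v (norm y)" and e: "e > 0" and \<sigma>: "\<sigma> \<noteq> 0"
    and loc: "\<forall>w\<in>Uspace R2 R1. normU R2 R1 (\<lambda>x. w x - u x) < e \<longrightarrow>
                 \<sigma> * Ifun lam R2 R1 f w \<le> \<sigma> * Ifun lam R2 R1 f u"
  shows "\<forall>r\<in>{R2..R1}. v' r = z2 lam (Ff k R2 f r)"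
proof -
  have v'c: "continuous_on {R2..R1} v'" using C1 by (simp add: C1_on_with_def)
  define q where "q = (\<lambda>r. r^k * cub lam (v' r) + Gf f k R2 r)"
  have qc: "continuous_on {R2..R1} q" unfolding q_def cub_def by (intro continuous_intros v'c G_cont)
  define \<psi> where "\<psi> = (\<lambda>r. q r * ((r - R2) * (R1 - r)))"
  have \<psi>c: "continuous_on {R2..R1} \<psi>" unfolding \<psi>_def by (intro continuous_intros qc)
  have \<psi>0: "\<psi> R1 = 0" "\<psi> R2 = 0" by (simp_all add: \<psi>_def)
  obtain e' where e': "e' > 0" and P: "\<forall>\<epsilon>. \<bar>\<epsilon>\<bar> < e' \<longrightarrow> \<sigma> * (
    \<epsilon> * integral {R2..R1} (\<lambda>r. (r^k * cub lam (v' r) + Gf f k R2 r) * \<psi> r)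
    + \<epsilon>^2 * integral {R2..R1} (\<lambda>r. r^k * (3*(v' r)^2/2 - lam)/2 * (\<psi> r)^2)
    + \<epsilon>^3 * integral {R2..R1} (\<lambda>r. r^k * v' r / 2 * (\<psi> r)^3)
    + \<epsilon>^4 * integral {R2..R1} (\<lambda>r. r^k / 8 * (\<psi> r)^4)) \<le> 0"
    using perturb[OF kn C1 v0 ueq \<psi>c \<psi>0 e loc] by blast
  define a1 where "a1 = integral {R2..R1} (\<lambda>r. q r * \<psi> r)"
  have "\<sigma> * a1 = 0"
  proof (rule first_var[OF e'])
    fix \<epsilon> :: real assume "\<bar>\<epsilon>\<bar> < e'"
    then show "\<epsilon> * (\<sigma> * a1) + \<epsilon>^2 * (\<sigma> * integral {R2..R1} (\<lambda>r. r^k * (3*(v' r)^2/2 - lam)/2 * (\<psi> r)^2))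
       + \<epsilon>^3 * (\<sigma> * integral {R2..R1} (\<lambda>r. r^k * v' r / 2 * (\<psi> r)^3))
       + \<epsilon>^4 * (\<sigma> * integral {R2..R1} (\<lambda>r. r^k / 8 * (\<psi> r)^4)) \<le> 0"
      using P by (simp add: a1_def q_def algebra_simps)
  qed
  then have a10: "a1 = 0" using \<sigma> by simp
  define h where "h = (\<lambda>r. (q r)^2 * ((r - R2) * (R1 - r)))"
  have hc: "continuous_on {R2..R1} h" unfolding h_def by (intro continuous_intros qc)
  have hnn: "0 \<le> h r" if "r \<in> {R2..R1}" for r using that unfolding h_def by (auto intro!: mult_nonneg_nonneg)
  have hi: "integral {R2..R1} h = 0" using a10 unfolding a1_def h_def \<psi>_def by (simp add: power2_eq_square mult.assoc)
  have crit: "\<forall>r\<in>{R2<..<R1}. r^k * cub lam (v' r) + Gf f k R2 r = 0"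
  proof
    fix r assume r: "r \<in> {R2<..<R1}"
    have "h r = 0" by (rule int_zero_nonneg[OF _ hc hnn hi]) (use R r in auto)
    moreover have "(r - R2) * (R1 - r) \<noteq> 0" using r by auto
    ultimately show "r^k * cub lam (v' r) + Gf f k R2 r = 0" by (simp add: h_def q_def)
  qed
  show ?thesis by (rule crit_z2[OF v'c v0(2) v0(1) crit])
qed

lemma form_of:
  fixes u :: "real^'n \<Rightarrow> real"
  assumes C1: "C1_on_with R2 R1 v v'" and vz: "\<forall>r\<in>{R2..R1}. v' r = z2 lam (Ff k R2 f r)"
    and ueq: "\<forall>y\<in>cl_annulus R2 R1. u y = v (norm y)"
  shows "\<forall>x\<in>cl_annulus R2 R1. u x = v R2 + integral {R2..norm x} (\<lambda>\<rho>. z2 lam (Ff k R2 f \<rho>))"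
proof
  fix x :: "real^'n" assume x: "x \<in> cl_annulus R2 R1"
  define r where "r = norm x"
  have r: "r \<in> {R2..R1}" using x by (auto simp: r_def cl_annulus_def)
  have "(v' has_integral v r - v R2) {R2..r}"
  proof (rule fundamental_theorem_of_calculus)
    show "R2 \<le> r" using r by simp
    fix y assume y: "y \<in> {R2..r}"
    then have y': "y \<in> {R2..R1}" using r by auto
    have "(v has_vector_derivative v' y) (at y within {R2..R1})"
      using C1 y' by (simp add: C1_on_with_def has_real_derivative_iff_has_vector_derivative)
    then show "(v has_vector_derivative v' y) (at y within {R2..r})"
      by (rule has_vector_derivative_within_subset) (use r in auto)
  qed
  then have "integral {R2..r} v' = v r - v R2" by (rule integral_unique)
  moreover have "integral {R2..r} v' = integral {R2..r} (\<lambda>\<rho>. z2 lam (Ff k R2 f \<rho>))"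
    by (rule integral_cong) (use vz r in auto)
  ultimately show "u x = v R2 + integral {R2..norm x} (\<lambda>\<rho>. z2 lam (Ff k R2 f \<rho>))"
    using ueq x by (simp add: r_def)
qed

lemma max_imp_form:
  fixes ub :: "real^'n \<Rightarrow> real"
  assumes kn: "k = CARD('n) - 1" and lm: "local_max_U lam R2 R1 f ub"
  shows "\<exists>u0. \<forall>x\<in>cl_annulus R2 R1. ub x = u0 + integral {R2..norm x} (\<lambda>\<rho>. z2 lam (Ff k R2 f \<rho>))"
proof -
  obtain v v' where C1: "C1_on_with R2 R1 v v'" and v0: "v' R1 = 0" "v' R2 = 0"
    and ueq: "\<forall>y\<in>cl_annulus R2 R1. ub y = v (norm y)"
    using lm unfolding local_max_U_def Uspace_def by blast
  obtain e where e: "e > 0" and loc: "\<forall>w\<in>Uspace R2 R1. normU R2 R1 (\<lambda>x. w x - ub x) < e \<longrightarrow>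
      Ifun lam R2 R1 f w \<le> Ifun lam R2 R1 f ub"
    using lm unfolding local_max_U_def by blast
  have loc': "\<forall>w\<in>Uspace R2 R1. normU R2 R1 (\<lambda>x. w x - ub x) < e \<longrightarrow>
      1 * Ifun lam R2 R1 f w \<le> 1 * Ifun lam R2 R1 f ub" using loc by simp
  have vz: "\<forall>r\<in>{R2..R1}. v' r = z2 lam (Ff k R2 f r)"
    by (rule crit_from_loc[OF kn C1 v0 ueq e _ loc']) simp
  show ?thesis using form_of[OF C1 vz ueq] by blast
qed


lemma no_min:
  fixes u :: "real^'n \<Rightarrow> real"
  assumes kn: "k = CARD('n) - 1" and lm: "local_min_U lam R2 R1 f u"
  shows False
proof -
  obtain v v' where C1: "C1_on_with R2 R1 v v'" and v0: "v' R1 = 0" "v' R2 = 0"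
    and ueq: "\<forall>y\<in>cl_annulus R2 R1. u y = v (norm y)"
    using lm unfolding local_min_U_def Uspace_def by blast
  obtain e where e: "e > 0" and loc: "\<forall>w\<in>Uspace R2 R1. normU R2 R1 (\<lambda>x. w x - u x) < e \<longrightarrow>
      Ifun lam R2 R1 f u \<le> Ifun lam R2 R1 f w"
    using lm unfolding local_min_U_def by blast
  have loc': "\<forall>w\<in>Uspace R2 R1. normU R2 R1 (\<lambda>x. w x - u x) < e \<longrightarrow>
      (-1) * Ifun lam R2 R1 f w \<le> (-1) * Ifun lam R2 R1 f u" using loc by simp
  have vz: "\<forall>r\<in>{R2..R1}. v' r = z2 lam (Ff k R2 f r)"
    by (rule crit_from_loc[OF kn C1 v0 ueq e _ loc']) simp
  have v'c: "continuous_on {R2..R1} v'" using C1 by (simp add: C1_on_with_def)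
  define \<psi> where "\<psi> = (\<lambda>r::real. (r - R2) * (R1 - r))"
  have \<psi>c: "continuous_on {R2..R1} \<psi>" unfolding \<psi>_def by (intro continuous_intros)
  have \<psi>0: "\<psi> R1 = 0" "\<psi> R2 = 0" by (simp_all add: \<psi>_def)
  obtain e' where e': "e' > 0" and P: "\<forall>\<epsilon>. \<bar>\<epsilon>\<bar> < e' \<longrightarrow> (-1) * (
    \<epsilon> * integral {R2..R1} (\<lambda>r. (r^k * cub lam (v' r) + Gf f k R2 r) * \<psi> r)
    + \<epsilon>^2 * integral {R2..R1} (\<lambda>r. r^k * (3*(v' r)^2/2 - lam)/2 * (\<psi> r)^2)
    + \<epsilon>^3 * integral {R2..R1} (\<lambda>r. r^k * v' r / 2 * (\<psi> r)^3)
    + \<epsilon>^4 * integral {R2..R1} (\<lambda>r. r^k / 8 * (\<psi> r)^4)) \<le> (0::real)"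
    using perturb[OF kn C1 v0 ueq \<psi>c \<psi>0 e loc'] by blast
  have q0: "integral {R2..R1} (\<lambda>r. (r^k * cub lam (v' r) + Gf f k R2 r) * \<psi> r) = 0"
  proof -
    have "integral {R2..R1} (\<lambda>r. (r^k * cub lam (v' r) + Gf f k R2 r) * \<psi> r) = integral {R2..R1} (\<lambda>r. 0::real)"
    proof (rule integral_cong)
      fix r assume r: "r \<in> {R2..R1}"
      have "cub lam (v' r) = Ff k R2 f r" using vz r zF_props[OF r] by simp
      then show "(r^k * cub lam (v' r) + Gf f k R2 r) * \<psi> r = 0" using G_eq_F[OF r] by simp
    qed
    then show ?thesis by simp
  qed
  define g where "g = (\<lambda>r. r^k * (3*(v' r)^2/2 - lam)/2 * (\<psi> r)^2)"
  have "0 \<le> integral {R2..R1} g"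
  proof (rule second_var[OF e'])
    fix \<epsilon> :: real assume "\<bar>\<epsilon>\<bar> < e'"
    then show "0 \<le> \<epsilon>^2 * integral {R2..R1} g + \<epsilon>^3 * integral {R2..R1} (\<lambda>r. r^k * v' r / 2 * (\<psi> r)^3)
       + \<epsilon>^4 * integral {R2..R1} (\<lambda>r. r^k / 8 * (\<psi> r)^4)"
      using P q0 by (simp add: g_def algebra_simps)
  qed
  moreover have gneg: "g r \<le> 0" if r: "r \<in> {R2..R1}" for r
  proof -
    have "\<bar>v' r\<bar> < sqrt (2*lam/3)" using vz r zF_props[OF r] by (simp add: abs_less_iff)
    then have "(v' r)^2 < sqrt (2*lam/3) ^ 2" using power_strict_mono[of "\<bar>v' r\<bar>" "sqrt (2*lam/3)" 2] by simp
    then have "3*(v' r)^2/2 - lam < 0" using lam by simp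
    moreover have "r^k > 0" using r R by auto
    ultimately show ?thesis unfolding g_def
      by (intro mult_nonpos_nonneg) (auto intro!: mult_pos_neg divide_neg_pos simp: mult_le_0_iff)
  qed
  have gc: "continuous_on {R2..R1} g" unfolding g_def \<psi>_def by (auto intro!: continuous_intros v'c)
  have gi: "g integrable_on {R2..R1}" by (rule integrable_continuous_interval[OF gc])
  have "integral {R2..R1} (\<lambda>r. - g r) \<ge> 0" using gneg by (intro integral_nonneg integrable_neg gi) auto
  ultimately have "integral {R2..R1} (\<lambda>r. - g r) = 0" by (simp add: integral_neg)
  moreover define m where "m = (R1 + R2) / 2"
  have m: "m \<in> {R2..R1}" using R by (simp add: m_def)
  have "- g m = 0"
    by (rule int_zero_nonneg[of R2 R1 "\<lambda>r. - g r", OF _ _ _ \<open>integral {R2..R1} (\<lambda>r. - g r) = 0\<close> m])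
       (use R gneg in \<open>auto intro!: continuous_intros gc\<close>)
  moreover have "g m < 0"
  proof -
    have "\<bar>v' m\<bar> < sqrt (2*lam/3)" using vz m zF_props[OF m] by (simp add: abs_less_iff)
    then have "(v' m)^2 < sqrt (2*lam/3) ^ 2" using power_strict_mono[of "\<bar>v' m\<bar>" "sqrt (2*lam/3)" 2] by simp
    then have "3*(v' m)^2/2 - lam < 0" using lam by simp
    moreover have "m^k > 0" using m R by auto
    moreover have "\<psi> m \<noteq> 0" using R by (simp add: \<psi>_def m_def)
    ultimately show ?thesis unfolding g_def
      by (auto intro!: mult_pos_neg divide_neg_pos mult_neg_pos simp: mult_less_0_iff)
  qed
  ultimately show False by simp
qed


lemma form_imp_max:
  fixes ub :: "real^'n \<Rightarrow> real"
  assumes kn: "k = CARD('n) - 1" and ubU: "ub \<in> Uspace R2 R1"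
    and H: "\<forall>x\<in>cl_annulus R2 R1. ub x = u0 + integral {R2..norm x} (\<lambda>\<rho>. z2 lam (Ff k R2 f \<rho>))"
  shows "local_max_U lam R2 R1 f ub"
proof -
  obtain v v' where C1: "C1_on_with R2 R1 v v'" and v0: "v' R1 = 0" "v' R2 = 0"
    and ueq: "\<forall>y\<in>cl_annulus R2 R1. ub y = v (norm y)"
    using ubU unfolding Uspace_def by blast
  have im: "norm ` (cl_annulus R2 R1 :: (real^'n) set) = {R2..R1}" by (rule norm_image_cl[OF R])
  have vform: "v r = u0 + integral {R2..r} (\<lambda>\<rho>. z2 lam (Ff k R2 f \<rho>))" if r: "r \<in> {R2..R1}" for r
  proof -
    obtain x :: "real^'n" where x: "x \<in> cl_annulus R2 R1" "norm x = r" using r im by (metis imageE)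
    show ?thesis using H ueq x by auto
  qed
  have vz: "v' r = z2 lam (Ff k R2 f r)" if r: "r \<in> {R2..R1}" for r
  proof -
    have "((\<lambda>r. integral {R2..r} (\<lambda>\<rho>. z2 lam (Ff k R2 f \<rho>))) has_real_derivative z2 lam (Ff k R2 f r)) (at r within {R2..R1})"
      unfolding has_real_derivative_iff_has_vector_derivative
      by (rule integral_has_vector_derivative[OF zF_cont r])
    then have "((\<lambda>r. u0 + integral {R2..r} (\<lambda>\<rho>. z2 lam (Ff k R2 f \<rho>))) has_real_derivative z2 lam (Ff k R2 f r)) (at r within {R2..R1})"
      by (intro derivative_eq_intros) auto
    then have d1: "(v has_real_derivative z2 lam (Ff k R2 f r)) (at r within {R2..R1})"
      by (rule has_field_derivative_transform_within[OF _ zero_less_one r]) (use vform in simp)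
    have d2: "(v has_real_derivative v' r) (at r within {R2..R1})" using C1 r by (simp add: C1_on_with_def)
    show ?thesis by (rule deriv_unique_interval[OF _ r d2 d1]) (use R in simp)
  qed
  obtain e0 where e0: "e0 > 0" and pm: "\<forall>r\<in>{R2..R1}. \<forall>z. \<bar>z - z2 lam (Ff k R2 f r)\<bar> < e0 \<longrightarrow>
       Qf lam f k R2 r z \<le> Qf lam f k R2 r (z2 lam (Ff k R2 f r))"
    using pointwise_max by blast
  have v'c: "continuous_on {R2..R1} v'" using C1 by (simp add: C1_on_with_def)
  define K where "K = real CARD('n) * unit_ball_vol (CARD('n))"
  have Kp: "K > 0" unfolding K_def by simp
  show ?thesis unfolding local_max_U_def
  proof (intro conjI ubU exI[of _ e0] e0 ballI impI)
    fix w assume wU: "w \<in> Uspace R2 R1" and wn: "normU R2 R1 (\<lambda>x. w x - ub x) < e0"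
    obtain vw vw' where C1w: "C1_on_with R2 R1 vw vw'"
      and weq: "\<forall>y\<in>cl_annulus R2 R1. w y = vw (norm y)"
      using wU unfolding Uspace_def by blast
    have vw'c: "continuous_on {R2..R1} vw'" using C1w by (simp add: C1_on_with_def)
    have C1d: "C1_on_with R2 R1 (\<lambda>r. vw r - v r) (\<lambda>r. vw' r - v' r)" by (rule C1_diff[OF C1 C1w])
    have deq: "\<forall>y\<in>cl_annulus R2 R1. w y - ub y = vw (norm y) - v (norm y)" using weq ueq by simp
    have pt: "Qf lam f k R2 r (vw' r) \<le> Qf lam f k R2 r (v' r)" if r: "r \<in> {R2..R1}" for r
    proof -
      have "\<bar>vw' r - v' r\<bar> \<le> normU R2 R1 (\<lambda>x. w x - ub x)" by (rule normU_lower[OF R C1d deq r])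
      then have "\<bar>vw' r - z2 lam (Ff k R2 f r)\<bar> < e0" using wn vz[OF r] by simp
      then show ?thesis using pm r vz[OF r] by simp
    qed
    have "Jf lam f k R2 R1 vw' \<le> Jf lam f k R2 R1 v'"
      unfolding Jf_def
      by (rule integral_le[OF integrable_continuous_interval[OF Q_cont[OF vw'c]]
              integrable_continuous_interval[OF Q_cont[OF v'c]] pt])
    then have "K * Jf lam f k R2 R1 vw' \<le> K * Jf lam f k R2 R1 v'" using Kp by simp
    then show "Ifun lam R2 R1 f w \<le> Ifun lam R2 R1 f ub"
      unfolding K_def Ifun_eq[OF kn C1w weq] Ifun_eq[OF kn C1 ueq] .
  qed
qed

end

theorem mainTheorem7:
  fixes R1 R2 lam :: real and f :: "real \<Rightarrow> real"
  assumes "R1 > R2" and "R2 > 0" and "lam > 0"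
    and "continuous_on {R2..R1} f"
    and "integral {R2..R1} (\<lambda>r. r ^ (CARD('n) - 1) * f r) = 0"
    and "\<exists>R3. R2 < R3 \<and> R3 < R1 \<and> f R3 = 0 \<and> (\<forall>r\<in>{R2..R1}. r \<noteq> R3 \<longrightarrow> f r \<noteq> 0)"
    and "integral {R2..R1} (\<lambda>r. \<bar>r ^ (CARD('n) - 1) * f r\<bar>)
           < R2 ^ (CARD('n) - 1) * (2 * lam / 3) powr (3/2)"
  shows "(\<nexists>u::(real^'n) \<Rightarrow> real. local_min_U lam R2 R1 f u) \<and>
         (\<forall>ub::(real^'n) \<Rightarrow> real. ub \<in> Uspace R2 R1 \<longrightarrow>
            (local_max_U lam R2 R1 f ub \<longleftrightarrow>
             (\<exists>u0. \<forall>x\<in>cl_annulus R2 R1.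
                ub x = u0 + integral {R2..norm x} (\<lambda>\<rho>. z2 lam (Ffun CARD('n) R2 f \<rho>)))))"
proof -
  define k where "k = CARD('n) - 1"
  have R: "0 < R2" "R2 < R1" using assms(1,2) by auto
  have fint': "integral {R2..R1} (\<lambda>r. r^k * f r) = 0" using assms(5) by (simp add: k_def)
  have fbd': "integral {R2..R1} (\<lambda>r. \<bar>r^k * f r\<bar>) < R2^k * (2*lam/3) powr (3/2)"
    using assms(7) by (simp add: k_def)
  have FF: "\<And>\<rho>. Ffun CARD('n) R2 f \<rho> = Ff k R2 f \<rho>" by (simp add: Ffun_def Ff_def Gf_def k_def)
  show ?thesis
  proof (intro conjI allI impI)
    show "\<nexists>u::(real^'n) \<Rightarrow> real. local_min_U lam R2 R1 f u"
      using no_min[OF R assms(3,4) fint' fbd' k_def] by blast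
  next
    fix ub :: "(real^'n) \<Rightarrow> real" assume ubU: "ub \<in> Uspace R2 R1"
    show "local_max_U lam R2 R1 f ub \<longleftrightarrow>
             (\<exists>u0. \<forall>x\<in>cl_annulus R2 R1.
                ub x = u0 + integral {R2..norm x} (\<lambda>\<rho>. z2 lam (Ffun CARD('n) R2 f \<rho>)))"
      unfolding FF
      using max_imp_form[OF R assms(3,4) fint' fbd' k_def] form_imp_max[OF R assms(3,4) fint' fbd' k_def ubU]
      by blast
  qed
qed

end
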